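(* Let $U$ be as in the context and let $\mathcal{A}$ be the set of critical points of $U$ in $\mathbb{S}^1$. Every weak KAM solution $w$ of negative type of $w'(x)(w'(x)-U'(x))=0$ on $\mathbb{S}^1$ is an invariant solution of the Lax–Oleinik semigroup, i.e. $S_tw=w$ for all $t\ge0$, and satisfies $$w(y)=\inf_{x\in\mathbb{S}^1}\big(w(x)+v(y;x)\big)=\inf_{z\in\mathcal{A}}\big(w(z)+h(y;z)\big),\qquad y\in\mathbb{S}^1.$$ In particular, the function $W(x)=\min_{j=1,\dots,k}\{W_j+h(x;x_j)\}$ with $W_i:=\min_{j=1,\dots,k}(\tilde h_R(x_i;x_{j+1})+\tilde h_L(x_i;x_j))$ is an invariant solution of $S_t$.
   Context: $\mathbb{S}^1=\mathbb{R}/\mathbb{Z}$; $U:\mathbb{R}\to\mathbb{R}$ smooth, skew periodic ($U(x)=\tilde U(x)-\bar bx$, $\tilde U$ smooth 1-periodic), whose critical points in one period are exactly $k\ge1$ local minima $x_1,\dots,x_k$ interleaved with $k$ local maxima, $0=x_{1/2}<x_1<x_{3/2}<\dots<x_k<x_{k+1/2}=1$, $x_{i+\ell k}=x_i+\ell$. $L(s,x)=\frac14(s+U'(x))^2$. Lax–Oleinik semigroup: $(S_tu)(y)=\inf_{x\in\mathbb{S}^1}\big(u(x)+\inf\{\int_0^tL(\dot\gamma,\gamma)d\tau:\gamma(0)=x,\gamma(t)=y\}\big)$. Mañé potential: $v(y;x)=\inf\{\int_0^TL(\dot\gamma,\gamma)dt:T\ge0,\gamma:[0,T]\to\mathbb{S}^1$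 absolutely continuous, $\gamma(0)=x,\gamma(T)=y\}$. Peierls barrier: $h(y;z)=\liminf_{T\to\infty}\inf\{\int_0^TL(\dot\gamma,\gamma)dt:\gamma(0)=z,\gamma(T)=y\}$. Right barrier: for $y\in[x_i,x_{i+k}]$, $h_R(y;x_i)=\inf\{\int_0^TL(\dot\gamma,\gamma)dt:T\ge0,\gamma:[0,T]\to\mathbb{R}$ absolutely continuous, $\gamma(0)=x_i,\gamma(T)=y\}$; left barrier $h_L(y;x_i)$, $y\in[x_{i-k},x_i]$, same formula; $\tilde h_R(x_i;x_{j+1})=h_R(x_i;x_{j+1})$ if $j<i$, $=h_R(x_{i+k};x_{j+1})$ if $j\ge i$; $\tilde h_L(x_i;x_j)=h_L(x_i;x_j)$ if $j\ge i$, $=h_L(x_{i-k};x_j)$ if $j<i$ ($x_{k+1}=x_1+1$). Weak KAM solution of negative type: continuous $u$ with (I) $u(\gamma(b))-u(\gamma(a))\le\int_a^bL(\dot\gamma,\gamma)dt$ for all absolutely continuous $\gamma:[a,b]\to\mathbb{S}^1$, and (II) for each $x$ a continuous piecewise $C^1$ $\gamma:(-\infty,0]\to\mathbb{S}^1$, $\gamma(0)=x$, with equality in (I) for all $a<b\le0$. *)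

theory Defs
  imports "HOL-Analysis.Analysis"
begin

definition smooth_fun :: "(real \<Rightarrow> real) \<Rightarrow> bool" where
  "smooth_fun f \<longleftrightarrow> (\<forall>n x. ((deriv ^^ n) f) differentiable (at x))"

definition skew_periodic :: "(real \<Rightarrow> real) \<Rightarrow> bool" where
  "skew_periodic U \<longleftrightarrow> (\<exists>Ut b. smooth_fun Ut \<and> (\<forall>x. Ut (x + 1) = Ut x) \<and>
                                  (\<forall>x. U x = Ut x - b * x))"

definition local_min_at :: "(real \<Rightarrow> real) \<Rightarrow> real \<Rightarrow> bool" where
  "local_min_at f t \<longleftrightarrow> (\<exists>e>0. \<forall>y. \<bar>y - t\<bar> < e \<longrightarrow> f t \<le> f y)"

definition local_max_at :: "(real \<Rightarrow> real) \<Rightarrow> real \<Rightarrow> bool" where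
  "local_max_at f t \<longleftrightarrow> (\<exists>e>0. \<forall>y. \<bar>y - t\<bar> < e \<longrightarrow> f y \<le> f t)"

(* q i stands for the paper's x_{i/2}, i = 1..2k+1.  So q 1 = x_{1/2} = 0,
   q (2k+1) = x_{k+1/2} = 1, local minima x_j = q (2j), local maxima at odd indices,
   and these are exactly the critical points of U in one period [0,1). *)
definition crit_config :: "(real \<Rightarrow> real) \<Rightarrow> nat \<Rightarrow> (nat \<Rightarrow> real) \<Rightarrow> bool" where
  "crit_config U k q \<longleftrightarrow>
     k \<ge> 1 \<and> q 1 = 0 \<and> q (2*k+1) = 1 \<and>
     (\<forall>i. 1 \<le> i \<and> i \<le> 2*k \<longrightarrow> q i < q (Suc i)) \<and>
     (\<forall>j. 1 \<le> j \<and> j \<le> k \<longrightarrow> local_min_at U (q (2*j))) \<and>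
     (\<forall>j. j \<le> k \<longrightarrow> local_max_at U (q (2*j+1))) \<and>
     {t \<in> {0..<1}. deriv U t = 0} = q ` {1..2*k}"

(* the local minima x_j, j = 1..k; extended by x_{j+k} = x_j + 1 as needed below *)
definition xmin :: "(nat \<Rightarrow> real) \<Rightarrow> nat \<Rightarrow> real" where
  "xmin q j = q (2*j)"

(* critical set A of U in S^1 (represented by [0,1)) *)
definition crit_set :: "(real \<Rightarrow> real) \<Rightarrow> real set" where
  "crit_set U = {t \<in> {0..<1}. deriv U t = 0}"

definition Lag :: "(real \<Rightarrow> real) \<Rightarrow> real \<Rightarrow> real \<Rightarrow> real" where
  "Lag U s x = (s + deriv U x)^2 / 4"

definition abs_cont_on :: "(real \<Rightarrow> real) \<Rightarrow> real \<Rightarrow> real \<Rightarrow> bool" where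
  "abs_cont_on f s t \<longleftrightarrow>
     (\<forall>\<epsilon>>0. \<exists>\<delta>>0. \<forall>(n::nat) a b.
        (\<forall>i<n. s \<le> a i \<and> a i \<le> b i \<and> b i \<le> t) \<and>
        (\<forall>i. Suc i < n \<longrightarrow> b i \<le> a (Suc i)) \<and>
        (\<Sum>i<n. b i - a i) < \<delta> \<longrightarrow>
        (\<Sum>i<n. \<bar>f (b i) - f (a i)\<bar>) < \<epsilon>)"

definition action :: "(real \<Rightarrow> real) \<Rightarrow> (real \<Rightarrow> real) \<Rightarrow> real \<Rightarrow> real \<Rightarrow> ereal" where
  "action U \<gamma> a b =
     (let I = (\<integral>\<^sup>+ t. ennreal (Lag U (vector_derivative \<gamma> (at t)) (\<gamma> t))
                                       * indicator {a..b} t \<partial>lborel)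
                          in if I = \<infinity> then \<infinity> else ereal (enn2real I))"

(* congruence mod 1: equality of the projections to S^1 = R/Z *)
definition cong1 :: "real \<Rightarrow> real \<Rightarrow> bool" where
  "cong1 a b \<longleftrightarrow> a - b \<in> \<int>"

definition minact :: "(real \<Rightarrow> real) \<Rightarrow> real \<Rightarrow> real \<Rightarrow> real \<Rightarrow> ereal" where
  "minact U t x y = (INF \<gamma> \<in> {\<gamma>. abs_cont_on \<gamma> 0 t \<and> \<gamma> 0 = x \<and> cong1 (\<gamma> t) y}. action U \<gamma> 0 t)"

(* Lax-Oleinik semigroup (functions on S^1 = 1-periodic functions on R) *)
definition LO :: "(real \<Rightarrow> real) \<Rightarrow> real \<Rightarrow> (real \<Rightarrow> ereal) \<Rightarrow> real \<Rightarrow> ereal" where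
  "LO U t u y = (INF x \<in> {0..<1}. u x + minact U t x y)"

definition mane :: "(real \<Rightarrow> real) \<Rightarrow> real \<Rightarrow> real \<Rightarrow> ereal" where
  "mane U y x = (INF p \<in> {(T, \<gamma>). T \<ge> 0 \<and> abs_cont_on \<gamma> 0 T \<and> \<gamma> 0 = x \<and> cong1 (\<gamma> T) y}.
                    action U (snd p) 0 (fst p))"

definition peierls :: "(real \<Rightarrow> real) \<Rightarrow> real \<Rightarrow> real \<Rightarrow> ereal" where
  "peierls U y z = Liminf at_top (\<lambda>T. minact U T z y)"

(* potential on the real line (no identification mod 1); h_R and h_L are this
   function restricted to y \<in> [x_i, x_{i+k}] resp. y \<in> [x_{i-k}, x_i] *)
definition maneR :: "(real \<Rightarrow> real) \<Rightarrow> real \<Rightarrow> real \<Rightarrow> ereal" where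
  "maneR U y x = (INF p \<in> {(T, \<gamma>). T \<ge> 0 \<and> abs_cont_on \<gamma> 0 T \<and> \<gamma> 0 = x \<and> \<gamma> T = y}.
                    action U (snd p) 0 (fst p))"

(* tilde h_R(x_i; x_{j+1}),  with x_{k+1} = x_1 + 1, x_{i+k} = x_i + 1 *)
definition hRt :: "(real \<Rightarrow> real) \<Rightarrow> nat \<Rightarrow> (nat \<Rightarrow> real) \<Rightarrow> nat \<Rightarrow> nat \<Rightarrow> ereal" where
  "hRt U k q i j =
     (let xj1 = (if j < k then xmin q (Suc j) else xmin q 1 + 1) in
      if j < i then maneR U (xmin q i) xj1 else maneR U (xmin q i + 1) xj1)"

(* tilde h_L(x_i; x_j),  with x_{i-k} = x_i - 1 *)
definition hLt :: "(real \<Rightarrow> real) \<Rightarrow> (nat \<Rightarrow> real) \<Rightarrow> nat \<Rightarrow> nat \<Rightarrow> ereal" where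
  "hLt U q i j =
     (if i \<le> j then maneR U (xmin q i) (xmin q j) else maneR U (xmin q i - 1) (xmin q j))"

definition Wcoef :: "(real \<Rightarrow> real) \<Rightarrow> nat \<Rightarrow> (nat \<Rightarrow> real) \<Rightarrow> nat \<Rightarrow> ereal" where
  "Wcoef U k q i = (MIN j \<in> {1..k}. hRt U k q i j + hLt U q i j)"

definition Wfun :: "(real \<Rightarrow> real) \<Rightarrow> nat \<Rightarrow> (nat \<Rightarrow> real) \<Rightarrow> real \<Rightarrow> ereal" where
  "Wfun U k q x = (MIN j \<in> {1..k}. Wcoef U k q j + peierls U x (xmin q j))"

definition weak_KAM_neg :: "(real \<Rightarrow> real) \<Rightarrow> (real \<Rightarrow> real) \<Rightarrow> bool" where
  "weak_KAM_neg U w \<longleftrightarrow>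
     continuous_on UNIV w \<and> (\<forall>x. w (x + 1) = w x) \<and>
     (\<forall>\<gamma> a b. a \<le> b \<and> abs_cont_on \<gamma> a b \<longrightarrow>
        ereal (w (\<gamma> b) - w (\<gamma> a)) \<le> action U \<gamma> a b) \<and>
     (\<forall>x. \<exists>\<gamma>. \<gamma> 0 = x \<and> (\<forall>a\<le>0. \<gamma> piecewise_C1_differentiable_on {a..0}) \<and>
        (\<forall>a b. a < b \<and> b \<le> 0 \<longrightarrow> ereal (w (\<gamma> b) - w (\<gamma> a)) = action U \<gamma> a b))"

end

theory Submission
  imports Defs
begin


lemma nn_envelope:
  fixes f :: "'a \<Rightarrow> ennreal"
  shows "\<exists>g\<in>borel_measurable M. (\<forall>x. g x \<le> f x) \<and> integral\<^sup>N M g = integral\<^sup>N M f"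
proof -
  define G where "G = {g. simple_function M g \<and> g \<le> f}"
  have "(\<lambda>_. 0) \<in> G" by (simp add: le_fun_def G_def)
  then have ne: "integral\<^sup>S M ` G \<noteq> {}" by blast
  from ennreal_Sup_countable_SUP[OF ne] obtain h where h: "incseq h" "range h \<subseteq> integral\<^sup>S M ` G" "Sup (integral\<^sup>S M ` G) = (SUP i. h i)"
    by (elim exE conjE)
  have "\<forall>n. \<exists>s. s \<in> G \<and> integral\<^sup>S M s = h n"
  proof
    fix n
    have "h n \<in> integral\<^sup>S M ` G" using h(2) by (rule subsetD) simp
    then obtain s where "s \<in> G" "h n = integral\<^sup>S M s" by (rule imageE)
    then show "\<exists>s. s \<in> G \<and> integral\<^sup>S M s = h n" by metis
  qed
  then obtain s where s: "\<And>n. s n \<in> G" "\<And>n. integral\<^sup>S M (s n) = h n" by metis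
  have sf: "simple_function M (s n)" "s n \<le> f" for n using s(1)[of n] by (simp_all add: G_def)
  define g where "g = (\<lambda>x. SUP n. s n x)"
  have meas: "g \<in> borel_measurable M"
    unfolding g_def by (rule borel_measurable_SUP) (simp_all add: borel_measurable_simple_function sf)
  have le: "\<forall>x. g x \<le> f x" unfolding g_def using sf(2) by (simp add: SUP_least le_fun_def)
  have "integral\<^sup>N M f \<le> integral\<^sup>N M g"
  proof -
    have "integral\<^sup>N M f = (SUP i. h i)" unfolding nn_integral_def using h(3) by (simp add: G_def)
    also have "\<dots> \<le> integral\<^sup>N M g"
    proof (rule SUP_least)
      fix n
      have "h n = integral\<^sup>N M (s n)" using s(2)[of n] sf(1)[of n] by (simp add: nn_integral_eq_simple_integral)
      also have "\<dots> \<le> integral\<^sup>N M g" unfolding g_def by (rule nn_integral_mono) (rule SUP_upper, simp)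
      finally show "h n \<le> integral\<^sup>N M g" .
    qed
    finally show ?thesis .
  qed
  moreover have "integral\<^sup>N M g \<le> integral\<^sup>N M f" using le by (intro nn_integral_mono) simp
  ultimately have "integral\<^sup>N M g = integral\<^sup>N M f" by (rule antisym[rotated])
  then show ?thesis using meas le by blast
qed



lemma nn_integral_split_set:
  fixes f :: "'a \<Rightarrow> ennreal"
  assumes A: "A \<in> sets M"
  shows "integral\<^sup>N M f = (\<integral>\<^sup>+x. f x * indicator A x \<partial>M) + (\<integral>\<^sup>+x. f x * indicator (- A) x \<partial>M)"
proof (rule antisym)
  obtain g where g: "g \<in> borel_measurable M" "\<forall>x. g x \<le> f x" "integral\<^sup>N M g = integral\<^sup>N M f"
    using nn_envelope by blast
  have "integral\<^sup>N M g = (\<integral>\<^sup>+x. g x * indicator A x + g x * indicator (- A) x \<partial>M)"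
    by (intro nn_integral_cong) (auto split: split_indicator)
  also have "\<dots> = (\<integral>\<^sup>+x. g x * indicator A x \<partial>M) + (\<integral>\<^sup>+x. g x * indicator (- A) x \<partial>M)"
    using g(1) A by (intro nn_integral_add) auto
  also have "\<dots> \<le> (\<integral>\<^sup>+x. f x * indicator A x \<partial>M) + (\<integral>\<^sup>+x. f x * indicator (- A) x \<partial>M)"
    using g(2) by (intro add_mono nn_integral_mono) (auto intro: mult_right_mono)
  finally show "integral\<^sup>N M f \<le> (\<integral>\<^sup>+x. f x * indicator A x \<partial>M) + (\<integral>\<^sup>+x. f x * indicator (- A) x \<partial>M)"
    using g(3) by simp
next
  obtain g1 where g1: "g1 \<in> borel_measurable M" "\<forall>x. g1 x \<le> f x * indicator A x"
    "integral\<^sup>N M g1 = (\<integral>\<^sup>+x. f x * indicator A x \<partial>M)"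
    using nn_envelope[where f="\<lambda>x. f x * indicator A x" and M=M] by blast
  obtain g2 where g2: "g2 \<in> borel_measurable M" "\<forall>x. g2 x \<le> f x * indicator (- A) x"
    "integral\<^sup>N M g2 = (\<integral>\<^sup>+x. f x * indicator (- A) x \<partial>M)"
    using nn_envelope[where f="\<lambda>x. f x * indicator (- A) x" and M=M] by blast
  have "(\<integral>\<^sup>+x. f x * indicator A x \<partial>M) + (\<integral>\<^sup>+x. f x * indicator (- A) x \<partial>M)
      = (\<integral>\<^sup>+x. g1 x + g2 x \<partial>M)" using g1 g2 by (simp add: nn_integral_add)
  also have "\<dots> \<le> integral\<^sup>N M f"
  proof (rule nn_integral_mono)
    fix x
    show "g1 x + g2 x \<le> f x"
      using g1(2)[rule_format, of x] g2(2)[rule_format, of x]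
      by (cases "x \<in> A") (auto simp: indicator_def)
  qed
  finally show "(\<integral>\<^sup>+x. f x * indicator A x \<partial>M) + (\<integral>\<^sup>+x. f x * indicator (- A) x \<partial>M) \<le> integral\<^sup>N M f" .
qed

lemma nn_integral_lborel_shift:
  fixes f :: "real \<Rightarrow> ennreal"
  shows "(\<integral>\<^sup>+x. f (x + c) \<partial>lborel) = integral\<^sup>N lborel f"
proof -
  have ge: "integral\<^sup>N lborel h \<le> (\<integral>\<^sup>+x. h (x + d) \<partial>lborel)" for h :: "real \<Rightarrow> ennreal" and d
  proof -
    obtain g where g: "g \<in> borel_measurable lborel" "\<forall>x. g x \<le> h x" "integral\<^sup>N lborel g = integral\<^sup>N lborel h"
      using nn_envelope[where f=h and M=lborel] by blast
    have gb: "g \<in> borel_measurable borel" using g(1) by simp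
    have "integral\<^sup>N lborel g = (\<integral>\<^sup>+x. g x \<partial>(distr lborel borel ((+) d)))"
      by (simp only: lborel_distr_plus)
    also have "\<dots> = (\<integral>\<^sup>+x. g (d + x) \<partial>lborel)"
      by (rule nn_integral_distr) (simp_all add: gb)
    also have "\<dots> \<le> (\<integral>\<^sup>+x. h (x + d) \<partial>lborel)"
      using g(2) by (intro nn_integral_mono) (simp add: add.commute)
    finally show ?thesis using g(3) by simp
  qed
  show ?thesis
  proof (rule antisym)
    show "integral\<^sup>N lborel f \<le> (\<integral>\<^sup>+x. f (x + c) \<partial>lborel)" by (rule ge)
    have "(\<integral>\<^sup>+x. f (x + c) \<partial>lborel) \<le> (\<integral>\<^sup>+x. f (x + (-c) + c) \<partial>lborel)"
      by (rule ge)
    then show "(\<integral>\<^sup>+x. f (x + c) \<partial>lborel) \<le> integral\<^sup>N lborel f" by simp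
  qed
qed




lemma periodic_int:
  fixes f :: "real \<Rightarrow> 'b"
  assumes per: "\<And>x. f (x + 1) = f x" and n: "n \<in> \<int>"
  shows "f (x + n) = f x"
proof -
  have nat: "f (x + real m) = f x" for x m
    by (induction m arbitrary: x) (simp_all add: per add.assoc[symmetric])
  obtain i where i: "n = of_int i" using n by (auto elim: Ints_cases)
  show ?thesis
  proof (cases "i \<ge> 0")
    case True
    then have "n = real (nat i)" using i by simp
    then show ?thesis using nat by simp
  next
    case False
    then have "n = - real (nat (-i))" using i by simp
    moreover have "f (x - real (nat (-i)) + real (nat (-i))) = f (x - real (nat (-i)))" by (rule nat)
    ultimately show ?thesis by simp
  qed
qed

lemma cong1_sym: "cong1 a b \<Longrightarrow> cong1 b a"
  unfolding cong1_def by (metis Ints_minus minus_diff_eq)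

lemma cong1_trans: "cong1 a b \<Longrightarrow> cong1 b c \<Longrightarrow> cong1 a c"
  unfolding cong1_def by (metis Ints_add diff_add_cancel add_diff_eq)

lemma cong1_refl: "cong1 a a" unfolding cong1_def by simp

lemma periodic_cong1:
  fixes f :: "real \<Rightarrow> 'b"
  assumes per: "\<And>x. f (x + 1) = f x" and "cong1 a b"
  shows "f a = f b"
proof -
  have "a - b \<in> \<int>" using assms(2) by (simp add: cong1_def)
  then have "f (b + (a - b)) = f b" by (rule periodic_int[where f=f, OF per])
  then show ?thesis by simp
qed

lemma cong1_frac: "cong1 x (x - of_int \<lfloor>x\<rfloor>)" and frac_range: "x - of_int \<lfloor>x\<rfloor> \<in> {0..<1}"
  unfolding cong1_def by (auto simp: floor_le_iff) linarith

lemma smooth_deriv: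
  assumes "smooth_fun U"
  shows "(U has_real_derivative deriv U x) (at x)" and "isCont (deriv U) x"
proof -
  have "U differentiable (at x)" using assms unfolding smooth_fun_def by (metis funpow_0)
  then show "(U has_real_derivative deriv U x) (at x)" by (simp add: DERIV_deriv_iff_real_differentiable)
  have "deriv U differentiable (at x)" using assms unfolding smooth_fun_def
    by (metis funpow_0 funpow_Suc_right o_apply)
  then show "isCont (deriv U) x" by (rule differentiable_imp_continuous_within)
qed

lemma dU_periodic:
  assumes "skew_periodic U"
  shows "deriv U (x + 1) = deriv U x"
proof -
  obtain Ut b where Ut: "smooth_fun Ut" "\<And>x. Ut (x + 1) = Ut x" "\<And>x. U x = Ut x - b * x"
    using assms unfolding skew_periodic_def by blast
  have dUt: "(Ut has_real_derivative deriv Ut z) (at z)" for z using smooth_deriv(1)[OF Ut(1)] .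
  have Ueq: "U = (\<lambda>x. Ut x - b * x)" using Ut(3) by auto
  have dU: "deriv U z = deriv Ut z - b" for z
  proof -
    have "(U has_real_derivative deriv Ut z - b) (at z)"
      unfolding Ueq by (auto intro!: derivative_eq_intros dUt)
    then show ?thesis by (rule DERIV_imp_deriv)
  qed
  have "((\<lambda>y. Ut (y + 1)) has_real_derivative deriv Ut (x + 1)) (at x)"
    using dUt[of "x+1"] by (simp add: DERIV_shift)
  moreover have "(\<lambda>y. Ut (y + 1)) = Ut" using Ut(2) by auto
  ultimately have "(Ut has_real_derivative deriv Ut (x + 1)) (at x)" by simp
  then have "deriv Ut (x + 1) = deriv Ut x" using dUt[of x] by (metis DERIV_unique)
  then show ?thesis using dU by simp
qed

lemma periodic_cont_bounded:
  fixes f :: "real \<Rightarrow> real"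
  assumes per: "\<And>x. f (x + 1) = f x" and c: "continuous_on UNIV f"
  shows "\<exists>M. \<forall>x. \<bar>f x\<bar> \<le> M"
proof -
  have "compact (f ` {0..1})" by (rule compact_continuous_image) (auto intro: continuous_on_subset[OF c])
  then obtain M where M: "\<forall>y\<in>f ` {0..1}. \<bar>y\<bar> \<le> M" using compact_imp_bounded bounded_real by blast
  have "\<bar>f x\<bar> \<le> M" for x
  proof -
    have "f x = f (x - of_int \<lfloor>x\<rfloor>)" by (rule periodic_cong1[where f=f, OF per cong1_frac])
    moreover have "x - of_int \<lfloor>x\<rfloor> \<in> {0..1}" using frac_range[of x] by auto
    ultimately show ?thesis using M by auto
  qed
  then show ?thesis by blast
qed

lemma periodic_cont_unif:
  fixes f :: "real \<Rightarrow> real"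
  assumes per: "\<And>x. f (x + 1) = f x" and c: "continuous_on UNIV f" and e: "e > 0"
  shows "\<exists>d>0. \<forall>x x'. \<bar>x - x'\<bar> < d \<longrightarrow> \<bar>f x - f x'\<bar> < e"
proof -
  have "uniformly_continuous_on {-1..2} f"
    by (rule compact_uniformly_continuous) (auto intro: continuous_on_subset[OF c])
  then obtain d0 where d0: "d0 > 0" "\<And>x x'. x \<in> {-1..2} \<Longrightarrow> x' \<in> {-1..2} \<Longrightarrow> dist x' x < d0 \<Longrightarrow> dist (f x') (f x) < e"
    unfolding uniformly_continuous_on_def using e by metis
  define d where "d = min d0 1"
  have "\<bar>f x - f x'\<bar> < e" if "\<bar>x - x'\<bar> < d" for x x'
  proof -
    define n :: real where "n = of_int \<lfloor>x\<rfloor>"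
    have n: "n \<in> \<int>" unfolding n_def by simp
    have fx: "f x = f (x - n)" and fx': "f x' = f (x' - n)"
      by (rule periodic_cong1[where f=f, OF per], simp add: cong1_def n)+
    have h1: "0 \<le> x - n" "x - n < 1" using frac_range[of x] unfolding n_def by auto
    have h2: "x - x' < 1" "x' - x < 1" using that unfolding d_def by (auto simp: abs_less_iff)
    have "x - n \<in> {-1..2}" "x' - n \<in> {-1..2}" unfolding atLeastAtMost_iff using h1 h2 by linarith+
    moreover have "dist (x' - n) (x - n) < d0" using that unfolding d_def dist_real_def by auto
    ultimately have "dist (f (x' - n)) (f (x - n)) < e" using d0(2) by blast
    then show ?thesis using fx fx' by (simp add: dist_real_def abs_minus_commute)
  qed
  moreover have "d > 0" using d0 unfolding d_def by simp
  ultimately show ?thesis by blast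
qed




definition LI :: "(real \<Rightarrow> real) \<Rightarrow> (real \<Rightarrow> real) \<Rightarrow> real \<Rightarrow> real \<Rightarrow> ennreal" where
  "LI U \<gamma> a b = (\<integral>\<^sup>+ t. ennreal (Lag U (vector_derivative \<gamma> (at t)) (\<gamma> t)) * indicator {a..b} t \<partial>lborel)"

lemma action_LI: "action U \<gamma> a b = enn2ereal (LI U \<gamma> a b)"
proof -
  have "enn2ereal I = (if I = \<infinity> then \<infinity> else ereal (enn2real I))" for I :: ennreal
    by (cases I) (auto simp: enn2real_def)
  then show ?thesis unfolding action_def LI_def Let_def by simp
qed

lemma action_nonneg: "0 \<le> action U \<gamma> a b"
  by (simp add: action_LI)

lemma vd_cong_open:
  assumes "open S" "t \<in> S" "\<And>x. x \<in> S \<Longrightarrow> f x = g x"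
  shows "vector_derivative f (at t) = vector_derivative g (at t)"
proof -
  have "(f has_vector_derivative d) (at t) \<longleftrightarrow> (g has_vector_derivative d) (at t)" for d
    using has_vector_derivative_transform_within_open[OF _ assms(1,2), of f d g]
      has_vector_derivative_transform_within_open[OF _ assms(1,2), of g d f] assms(3) by metis
  then show ?thesis unfolding vector_derivative_def by simp
qed

lemma vd_shift: fixes \<gamma> :: "real \<Rightarrow> real" shows "vector_derivative (\<lambda>s. \<gamma> (s + c)) (at t) = vector_derivative \<gamma> (at (t + c))"
proof -
  have "((\<lambda>s. \<gamma> (s + c)) has_vector_derivative d) (at t) \<longleftrightarrow> (\<gamma> has_vector_derivative d) (at (t + c))" for d
  proof -
    have "((\<lambda>s. \<gamma> (s + c)) has_real_derivative d) (at t) \<longleftrightarrow> (\<gamma> has_real_derivative d) (at (t + c))"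
      using DERIV_shift[of \<gamma> d t c] by simp
    then show ?thesis by (simp add: has_real_derivative_iff_has_vector_derivative)
  qed
  then show ?thesis unfolding vector_derivative_def by simp
qed

lemma vd_add_const: "vector_derivative (\<lambda>s. \<gamma> s + n) (at t) = vector_derivative \<gamma> (at t)"
  unfolding vector_derivative_def by (simp add: has_vector_derivative_add_const)

lemma vd_linear: "vector_derivative (\<lambda>s. p + s * d) (at t) = (d::real)"
proof -
  have "((\<lambda>s. p + s * d) has_real_derivative d) (at t)" by (auto intro!: derivative_eq_intros)
  then show ?thesis by (simp add: has_real_derivative_iff_has_vector_derivative vector_derivative_at)
qed

lemma vd_const: "vector_derivative (\<lambda>s. (p::real)) (at t) = 0"
  using vd_linear[of p 0 t] by simp

lemma LI_split:
  assumes "a \<le> c" "c \<le> b"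
  shows "LI U \<gamma> a b = LI U \<gamma> a c + LI U \<gamma> c b"
proof -
  define F where "F t = ennreal (Lag U (vector_derivative \<gamma> (at t)) (\<gamma> t))" for t
  have "LI U \<gamma> a b = (\<integral>\<^sup>+t. F t * indicator {a..b} t * indicator {a..c} t \<partial>lborel)
      + (\<integral>\<^sup>+t. F t * indicator {a..b} t * indicator (- {a..c}) t \<partial>lborel)"
    unfolding LI_def F_def by (rule nn_integral_split_set) simp
  also have "(\<integral>\<^sup>+t. F t * indicator {a..b} t * indicator {a..c} t \<partial>lborel) = LI U \<gamma> a c"
    unfolding LI_def F_def using assms by (intro nn_integral_cong) (auto split: split_indicator)
  also have "(\<integral>\<^sup>+t. F t * indicator {a..b} t * indicator (- {a..c}) t \<partial>lborel) = LI U \<gamma> c b"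
    unfolding LI_def F_def[symmetric]
  proof (rule nn_integral_cong_AE)
    have "AE t in lborel. t \<noteq> c" by (rule AE_lborel_singleton)
    then show "AE t in lborel. F t * indicator {a..b} t * indicator (- {a..c}) t = F t * indicator {c..b} t"
      by eventually_elim (use assms in \<open>auto split: split_indicator\<close>)
  qed
  finally show ?thesis .
qed

lemma action_split:
  assumes "a \<le> c" "c \<le> b"
  shows "action U \<gamma> a b = action U \<gamma> a c + action U \<gamma> c b"
  using LI_split[OF assms] by (simp add: action_LI plus_ennreal.rep_eq)

lemma LI_cong_open:
  assumes "\<And>t. t \<in> {a<..<b} \<Longrightarrow> \<gamma> t = \<gamma>' t"
  shows "LI U \<gamma> a b = LI U \<gamma>' a b"
  unfolding LI_def
proof (rule nn_integral_cong_AE)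
  have "AE t in lborel. t \<noteq> a" "AE t in lborel. t \<noteq> b" by (rule AE_lborel_singleton)+
  then show "AE t in lborel. ennreal (Lag U (vector_derivative \<gamma> (at t)) (\<gamma> t)) * indicator {a..b} t =
        ennreal (Lag U (vector_derivative \<gamma>' (at t)) (\<gamma>' t)) * indicator {a..b} t"
  proof eventually_elim
    case (elim t)
    show ?case
    proof (cases "t \<in> {a<..<b}")
      case True
      have "vector_derivative \<gamma> (at t) = vector_derivative \<gamma>' (at t)"
        by (rule vd_cong_open[of "{a<..<b}"]) (use True assms in auto)
      then show ?thesis using assms True by simp
    next
      case False
      then have "t \<notin> {a..b}" using elim by auto
      then show ?thesis by simp
    qed
  qed
qed

lemma action_cong_open:
  assumes "\<And>t. t \<in> {a<..<b} \<Longrightarrow> \<gamma> t = \<gamma>' t"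
  shows "action U \<gamma> a b = action U \<gamma>' a b"
  using LI_cong_open[OF assms] by (simp add: action_LI)

lemma LI_shift_time: "LI U (\<lambda>s. \<gamma> (s + c)) a b = LI U \<gamma> (a + c) (b + c)"
proof -
  define G where "G t = ennreal (Lag U (vector_derivative \<gamma> (at t)) (\<gamma> t)) * indicator {a+c..b+c} t" for t
  have "LI U (\<lambda>s. \<gamma> (s + c)) a b = (\<integral>\<^sup>+t. G (t + c) \<partial>lborel)"
    unfolding LI_def G_def vd_shift by (intro nn_integral_cong) (auto split: split_indicator)
  also have "\<dots> = integral\<^sup>N lborel G" by (rule nn_integral_lborel_shift)
  finally show ?thesis unfolding LI_def G_def .
qed

lemma action_shift_time: "action U (\<lambda>s. \<gamma> (s + c)) a b = action U \<gamma> (a + c) (b + c)"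
  by (simp add: action_LI LI_shift_time)

lemma action_shift_space:
  assumes per: "\<And>x. deriv U (x + 1) = deriv U x" and n: "n \<in> \<int>"
  shows "action U (\<lambda>s. \<gamma> s + n) a b = action U \<gamma> a b"
proof -
  have "deriv U (\<gamma> t + n) = deriv U (\<gamma> t)" for t by (rule periodic_int[where f="deriv U", OF per n])
  then show ?thesis unfolding action_LI LI_def Lag_def vd_add_const by simp
qed

lemma action_point: "action U \<gamma> a a = 0"
proof -
  have "LI U \<gamma> a a = 0" unfolding LI_def by simp
  then show ?thesis by (simp add: action_LI zero_ennreal.rep_eq)
qed

lemma action_const:
  assumes "deriv U z = 0"
  shows "action U (\<lambda>s. z) a b = 0"
  unfolding action_LI LI_def vd_const Lag_def using assms by (simp add: zero_ennreal.rep_eq)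




definition adm :: "real \<Rightarrow> real \<Rightarrow> nat \<Rightarrow> (nat \<Rightarrow> real) \<Rightarrow> (nat \<Rightarrow> real) \<Rightarrow> bool" where
  "adm s t n a b \<longleftrightarrow> (\<forall>i<n. s \<le> a i \<and> a i \<le> b i \<and> b i \<le> t) \<and> (\<forall>i. Suc i < n \<longrightarrow> b i \<le> a (Suc i))"

lemma ac_iff: "abs_cont_on f s t \<longleftrightarrow> (\<forall>e>0. \<exists>d>0. \<forall>n a b. adm s t n a b \<longrightarrow> (\<Sum>i<n. b i - a i) < d \<longrightarrow>
   (\<Sum>i<n. \<bar>f (b i) - f (a i)\<bar>) < e)"
  unfolding abs_cont_on_def adm_def by (simp only: imp_conjL)

lemma acD:
  assumes "abs_cont_on f s t" "e > 0"
  obtains d where "d > 0" "\<And>n a b. adm s t n a b \<Longrightarrow> (\<Sum>i<n. b i - a i) < d \<Longrightarrow> (\<Sum>i<n. \<bar>f (b i) - f (a i)\<bar>) < e"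
proof -
  have "\<exists>d>0. \<forall>n a b. adm s t n a b \<longrightarrow> (\<Sum>i<n. b i - a i) < d \<longrightarrow> (\<Sum>i<n. \<bar>f (b i) - f (a i)\<bar>) < e"
    using assms unfolding ac_iff by simp
  then obtain d where "d > 0" "\<forall>n a b. adm s t n a b \<longrightarrow> (\<Sum>i<n. b i - a i) < d \<longrightarrow> (\<Sum>i<n. \<bar>f (b i) - f (a i)\<bar>) < e"
    by (elim exE conjE)
  then show ?thesis using that by simp
qed

lemma acI:
  assumes "\<And>e. e > 0 \<Longrightarrow> \<exists>d>0. \<forall>n a b. adm s t n a b \<longrightarrow> (\<Sum>i<n. b i - a i) < d \<longrightarrow> (\<Sum>i<n. \<bar>f (b i) - f (a i)\<bar>) < e"
  shows "abs_cont_on f s t"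
  unfolding ac_iff using assms by simp

lemma ac_lipschitz:
  assumes K: "K \<ge> 0" and L: "\<And>x y. x \<in> {s..t} \<Longrightarrow> y \<in> {s..t} \<Longrightarrow> \<bar>f x - f y\<bar> \<le> K * \<bar>x - y\<bar>"
  shows "abs_cont_on f s t"
proof (rule acI)
  fix e :: real assume e: "e > 0"
  define d where "d = e / (K + 1)"
  have d: "d > 0" using e K unfolding d_def by simp
  show "\<exists>d>0. \<forall>n a b. adm s t n a b \<longrightarrow> (\<Sum>i<n. b i - a i) < d \<longrightarrow> (\<Sum>i<n. \<bar>f (b i) - f (a i)\<bar>) < e"
  proof (intro exI[of _ d] conjI allI impI)
    show "d > 0" by (rule d)
    fix n a b assume h: "adm s t n a b" and hs: "(\<Sum>i<n. b i - a i) < d"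
    have "(\<Sum>i<n. \<bar>f (b i) - f (a i)\<bar>) \<le> (\<Sum>i<n. K * (b i - a i))"
    proof (rule sum_mono)
      fix i assume "i \<in> {..<n}"
      then have "s \<le> a i" "a i \<le> b i" "b i \<le> t" using h unfolding adm_def by auto
      then show "\<bar>f (b i) - f (a i)\<bar> \<le> K * (b i - a i)" using L[of "b i" "a i"] by auto
    qed
    also have "\<dots> = K * (\<Sum>i<n. b i - a i)" by (simp add: sum_distrib_left)
    also have "\<dots> \<le> K * d" using hs K by (intro mult_left_mono) simp_all
    also have "\<dots> < e" using e K unfolding d_def by (simp add: field_simps)
    finally show "(\<Sum>i<n. \<bar>f (b i) - f (a i)\<bar>) < e" .
  qed
qed

lemma ac_sub:
  assumes "abs_cont_on f s t" "s \<le> s'" "t' \<le> t"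
  shows "abs_cont_on f s' t'"
proof (rule acI)
  fix e :: real assume e: "e > 0"
  obtain d where d: "d > 0" "\<And>n a b. adm s t n a b \<Longrightarrow> (\<Sum>i<n. b i - a i) < d \<Longrightarrow> (\<Sum>i<n. \<bar>f (b i) - f (a i)\<bar>) < e"
    using acD[OF assms(1) e] by blast
  show "\<exists>d>0. \<forall>n a b. adm s' t' n a b \<longrightarrow> (\<Sum>i<n. b i - a i) < d \<longrightarrow> (\<Sum>i<n. \<bar>f (b i) - f (a i)\<bar>) < e"
  proof (intro exI[of _ d] conjI allI impI)
    show "d > 0" by (rule d)
    fix n a b assume h: "adm s' t' n a b" and hs: "(\<Sum>i<n. b i - a i) < d"
    have "adm s t n a b" using h assms(2,3) unfolding adm_def by force
    then show "(\<Sum>i<n. \<bar>f (b i) - f (a i)\<bar>) < e" using d(2) hs by blast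
  qed
qed

lemma ac_cong:
  assumes "abs_cont_on f s t" "\<And>x. x \<in> {s..t} \<Longrightarrow> f x = g x"
  shows "abs_cont_on g s t"
proof (rule acI)
  fix e :: real assume e: "e > 0"
  obtain d where d: "d > 0" "\<And>n a b. adm s t n a b \<Longrightarrow> (\<Sum>i<n. b i - a i) < d \<Longrightarrow> (\<Sum>i<n. \<bar>f (b i) - f (a i)\<bar>) < e"
    using acD[OF assms(1) e] by blast
  show "\<exists>d>0. \<forall>n a b. adm s t n a b \<longrightarrow> (\<Sum>i<n. b i - a i) < d \<longrightarrow> (\<Sum>i<n. \<bar>g (b i) - g (a i)\<bar>) < e"
  proof (intro exI[of _ d] conjI allI impI)
    show "d > 0" by (rule d)
    fix n a b assume h: "adm s t n a b" and hs: "(\<Sum>i<n. b i - a i) < d"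
    have "(\<Sum>i<n. \<bar>g (b i) - g (a i)\<bar>) = (\<Sum>i<n. \<bar>f (b i) - f (a i)\<bar>)"
    proof (rule sum.cong)
      fix i assume "i \<in> {..<n}"
      then have "a i \<in> {s..t}" "b i \<in> {s..t}" using h unfolding adm_def by auto
      then show "\<bar>g (b i) - g (a i)\<bar> = \<bar>f (b i) - f (a i)\<bar>" using assms(2) by simp
    qed simp
    then show "(\<Sum>i<n. \<bar>g (b i) - g (a i)\<bar>) < e" using d(2)[OF h hs] by simp
  qed
qed

lemma ac_shift:
  assumes "abs_cont_on f (s + c) (t + c)"
  shows "abs_cont_on (\<lambda>x. f (x + c) + m) s t"
proof (rule acI)
  fix e :: real assume e: "e > 0"
  obtain d where d: "d > 0" "\<And>n a b. adm (s + c) (t + c) n a b \<Longrightarrow> (\<Sum>i<n. b i - a i) < d \<Longrightarrow> (\<Sum>i<n. \<bar>f (b i) - f (a i)\<bar>) < e"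
    using acD[OF assms(1) e] by blast
  show "\<exists>d>0. \<forall>n a b. adm s t n a b \<longrightarrow> (\<Sum>i<n. b i - a i) < d \<longrightarrow> (\<Sum>i<n. \<bar>(f (b i + c) + m) - (f (a i + c) + m)\<bar>) < e"
  proof (intro exI[of _ d] conjI allI impI)
    show "d > 0" by (rule d)
    fix n a b assume h: "adm s t n a b" and hs: "(\<Sum>i<n. b i - a i) < d"
    have "adm (s + c) (t + c) n (\<lambda>i. a i + c) (\<lambda>i. b i + c)" using h unfolding adm_def by auto
    moreover have "(\<Sum>i<n. (b i + c) - (a i + c)) < d" using hs by simp
    ultimately have "(\<Sum>i<n. \<bar>f (b i + c) - f (a i + c)\<bar>) < e" using d(2) by blast
    then show "(\<Sum>i<n. \<bar>(f (b i + c) + m) - (f (a i + c) + m)\<bar>) < e" by simp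
  qed
qed

lemma ac_concat:
  assumes f1: "abs_cont_on f s m" and f2: "abs_cont_on f m t" and sm: "s \<le> m" and mt: "m \<le> t"
  shows "abs_cont_on f s t"
proof (rule acI)
  fix e :: real assume e: "e > 0"
  have e2: "e/2 > 0" using e by simp
  obtain d1 where d1: "d1 > 0" "\<And>n a b. adm s m n a b \<Longrightarrow> (\<Sum>i<n. b i - a i) < d1 \<Longrightarrow> (\<Sum>i<n. \<bar>f (b i) - f (a i)\<bar>) < e/2"
    using acD[OF f1 e2] by blast
  obtain d2 where d2: "d2 > 0" "\<And>n a b. adm m t n a b \<Longrightarrow> (\<Sum>i<n. b i - a i) < d2 \<Longrightarrow> (\<Sum>i<n. \<bar>f (b i) - f (a i)\<bar>) < e/2"
    using acD[OF f2 e2] by blast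
  define d where "d = min d1 d2"
  show "\<exists>d>0. \<forall>n a b. adm s t n a b \<longrightarrow> (\<Sum>i<n. b i - a i) < d \<longrightarrow> (\<Sum>i<n. \<bar>f (b i) - f (a i)\<bar>) < e"
  proof (intro exI[of _ d] conjI allI impI)
    show "d > 0" using d1 d2 unfolding d_def by simp
    fix n a b assume h: "adm s t n a b" and hs: "(\<Sum>i<n. b i - a i) < d"
    define a1 where "a1 i = min (a i) m" for i
    define b1 where "b1 i = min (b i) m" for i
    define a2 where "a2 i = max (a i) m" for i
    define b2 where "b2 i = max (b i) m" for i
    have ab: "a i \<le> b i" if "i < n" for i using h that unfolding adm_def by auto
    have le1: "b1 i - a1 i \<le> b i - a i" "b2 i - a2 i \<le> b i - a i" if "i < n" for i
      using ab[OF that] unfolding a1_def b1_def a2_def b2_def by auto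
    have "(\<Sum>i<n. b1 i - a1 i) \<le> (\<Sum>i<n. b i - a i)" by (rule sum_mono) (use le1 in auto)
    then have S1: "(\<Sum>i<n. b1 i - a1 i) < d1" using hs unfolding d_def by linarith
    have "(\<Sum>i<n. b2 i - a2 i) \<le> (\<Sum>i<n. b i - a i)" by (rule sum_mono) (use le1 in auto)
    then have S2: "(\<Sum>i<n. b2 i - a2 i) < d2" using hs unfolding d_def by linarith
    have c1: "adm s m n a1 b1"
      using h sm unfolding a1_def b1_def adm_def by (auto simp: min_def)
    have c2: "adm m t n a2 b2"
      using h mt unfolding a2_def b2_def adm_def by (auto simp: max_def)
    have "(\<Sum>i<n. \<bar>f (b i) - f (a i)\<bar>) \<le> (\<Sum>i<n. \<bar>f (b1 i) - f (a1 i)\<bar> + \<bar>f (b2 i) - f (a2 i)\<bar>)"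
    proof (rule sum_mono)
      fix i assume "i \<in> {..<n}"
      then have ab: "a i \<le> b i" using ab by auto
      consider "b i \<le> m" | "m \<le> a i" | "a i < m" "m < b i" by linarith
      then show "\<bar>f (b i) - f (a i)\<bar> \<le> \<bar>f (b1 i) - f (a1 i)\<bar> + \<bar>f (b2 i) - f (a2 i)\<bar>"
      proof cases
        case 1 then show ?thesis using ab unfolding a1_def b1_def a2_def b2_def by auto
      next
        case 2 then show ?thesis using ab unfolding a1_def b1_def a2_def b2_def by auto
      next
        case 3 then show ?thesis unfolding a1_def b1_def a2_def b2_def by auto
      qed
    qed
    also have "\<dots> = (\<Sum>i<n. \<bar>f (b1 i) - f (a1 i)\<bar>) + (\<Sum>i<n. \<bar>f (b2 i) - f (a2 i)\<bar>)"
      by (rule sum.distrib)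
    also have "\<dots> < e/2 + e/2" using d1(2)[OF c1 S1] d2(2)[OF c2 S2] by linarith
    finally show "(\<Sum>i<n. \<bar>f (b i) - f (a i)\<bar>) < e" by simp
  qed
qed

lemma ac_const: "abs_cont_on (\<lambda>x. c) s t"
  by (rule ac_lipschitz[of 0]) auto

lemma ac_linear: "abs_cont_on (\<lambda>x. p + x * d) s t"
  by (rule ac_lipschitz[of "\<bar>d\<bar>"]) (auto simp: left_diff_distrib[symmetric] abs_mult)




definition cat2 :: "(real \<Rightarrow> real) \<Rightarrow> real \<Rightarrow> (real \<Rightarrow> real) \<Rightarrow> real \<Rightarrow> real" where
  "cat2 \<gamma>1 T1 \<gamma>2 = (\<lambda>s. if s \<le> T1 then \<gamma>1 s else \<gamma>2 (s - T1) + (\<gamma>1 T1 - \<gamma>2 0))"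

lemma cat2_ac:
  assumes "abs_cont_on \<gamma>1 0 T1" "abs_cont_on \<gamma>2 0 T2" "0 \<le> T1" "0 \<le> T2"
  shows "abs_cont_on (cat2 \<gamma>1 T1 \<gamma>2) 0 (T1 + T2)"
proof (rule ac_concat[of _ 0 T1])
  show "abs_cont_on (cat2 \<gamma>1 T1 \<gamma>2) 0 T1"
    by (rule ac_cong[OF assms(1)]) (simp add: cat2_def)
  have "abs_cont_on \<gamma>2 (T1 + - T1) (T1 + T2 + - T1)" using assms(2) by simp
  then have "abs_cont_on (\<lambda>s. \<gamma>2 (s + - T1) + (\<gamma>1 T1 - \<gamma>2 0)) T1 (T1 + T2)" by (rule ac_shift)
  then show "abs_cont_on (cat2 \<gamma>1 T1 \<gamma>2) T1 (T1 + T2)"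
    by (rule ac_cong) (auto simp: cat2_def)
qed (use assms in auto)

lemma cat2_action:
  assumes per: "\<And>x. deriv U (x + 1) = deriv U x" and n: "\<gamma>1 T1 - \<gamma>2 0 \<in> \<int>" and "0 \<le> T1" "0 \<le> T2"
  shows "action U (cat2 \<gamma>1 T1 \<gamma>2) 0 (T1 + T2) = action U \<gamma>1 0 T1 + action U \<gamma>2 0 T2"
proof -
  have "action U (cat2 \<gamma>1 T1 \<gamma>2) 0 (T1 + T2) = action U (cat2 \<gamma>1 T1 \<gamma>2) 0 T1 + action U (cat2 \<gamma>1 T1 \<gamma>2) T1 (T1 + T2)"
    by (rule action_split) (use assms in auto)
  also have "action U (cat2 \<gamma>1 T1 \<gamma>2) 0 T1 = action U \<gamma>1 0 T1"
    by (rule action_cong_open) (simp add: cat2_def)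
  also have "action U (cat2 \<gamma>1 T1 \<gamma>2) T1 (T1 + T2) = action U (\<lambda>s. \<gamma>2 (s + - T1) + (\<gamma>1 T1 - \<gamma>2 0)) T1 (T1 + T2)"
    by (rule action_cong_open) (simp add: cat2_def)
  also have "\<dots> = action U (\<lambda>s. \<gamma>2 (s + - T1)) T1 (T1 + T2)"
    by (rule action_shift_space[OF per n])
  also have "\<dots> = action U \<gamma>2 (T1 + - T1) (T1 + T2 + - T1)"
    by (rule action_shift_time)
  finally show ?thesis by simp
qed

lemma ereal_le_INF_add:
  fixes f :: "'a \<Rightarrow> ereal" and g :: "'b \<Rightarrow> ereal"
  assumes le: "\<And>a b. a \<in> A \<Longrightarrow> b \<in> B \<Longrightarrow> c \<le> f a + g b"
    and f0: "\<And>a. a \<in> A \<Longrightarrow> 0 \<le> f a" and g0: "\<And>b. b \<in> B \<Longrightarrow> 0 \<le> g b"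
  shows "c \<le> (INF a\<in>A. f a) + (INF b\<in>B. g b)"
proof (cases "A = {} \<or> B = {}")
  case True
  have i1: "0 \<le> (INF a\<in>A. f a)" using f0 by (rule INF_greatest)
  have i2: "0 \<le> (INF b\<in>B. g b)" using g0 by (rule INF_greatest)
  from True show ?thesis
  proof
    assume "A = {}"
    then have "(INF a\<in>A. f a) + (INF b\<in>B. g b) = \<infinity>" using i2 by (simp add: top_ereal_def)
    then show ?thesis by (rule ssubst[where P="\<lambda>u. c \<le> u"]) simp
  next
    assume "B = {}"
    then have "(INF a\<in>A. f a) + (INF b\<in>B. g b) = \<infinity>" using i1 by (simp add: top_ereal_def)
    then show ?thesis by (rule ssubst[where P="\<lambda>u. c \<le> u"]) simp
  qed
next
  case False
  have i2: "0 \<le> (INF b\<in>B. g b)" using g0 by (rule INF_greatest)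
  have "(INF a\<in>A. f a) + (INF b\<in>B. g b) = (INF a\<in>A. f a + (INF b\<in>B. g b))"
    using False i2 f0 by (intro INF_ereal_add_left[symmetric]) auto
  also have "\<dots> = (INF a\<in>A. (INF b\<in>B. f a + g b))"
  proof (rule INF_cong[OF refl])
    fix a assume a: "a \<in> A"
    show "f a + (INF b\<in>B. g b) = (INF b\<in>B. f a + g b)"
      using False f0[OF a] g0 by (intro INF_ereal_add_right[symmetric]) auto
  qed
  also have "c \<le> \<dots>" using le by (intro INF_greatest) auto
  finally show ?thesis by simp
qed

lemma minact_le:
  assumes "abs_cont_on \<gamma> 0 T" "\<gamma> 0 = x" "cong1 (\<gamma> T) y"
  shows "minact U T x y \<le> action U \<gamma> 0 T"
  unfolding minact_def by (rule INF_lower) (use assms in simp)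

lemma minact_nonneg: "0 \<le> minact U T x y"
  unfolding minact_def by (rule INF_greatest) (rule action_nonneg)

lemma minact_concat:
  assumes per: "\<And>x. deriv U (x + 1) = deriv U x" and T: "0 \<le> T1" "0 \<le> T2"
  shows "minact U (T1 + T2) x y \<le> minact U T1 x z + minact U T2 z y"
  unfolding minact_def
proof (rule ereal_le_INF_add)
  fix \<gamma>1 \<gamma>2
  assume g1: "\<gamma>1 \<in> {\<gamma>. abs_cont_on \<gamma> 0 T1 \<and> \<gamma> 0 = x \<and> cong1 (\<gamma> T1) z}"
     and g2: "\<gamma>2 \<in> {\<gamma>. abs_cont_on \<gamma> 0 T2 \<and> \<gamma> 0 = z \<and> cong1 (\<gamma> T2) y}"
  have n: "\<gamma>1 T1 - \<gamma>2 0 \<in> \<int>" using g1 g2 by (simp add: cong1_def)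
  have ac: "abs_cont_on (cat2 \<gamma>1 T1 \<gamma>2) 0 (T1 + T2)" using cat2_ac g1 g2 T by blast
  have c0: "cat2 \<gamma>1 T1 \<gamma>2 0 = x" using g1 T by (simp add: cat2_def)
  have cT: "cong1 (cat2 \<gamma>1 T1 \<gamma>2 (T1 + T2)) y"
  proof (cases "T2 = 0")
    case True
    then show ?thesis using g1 g2 by (auto simp: cat2_def intro: cong1_trans)
  next
    case False
    then have "cat2 \<gamma>1 T1 \<gamma>2 (T1 + T2) = \<gamma>2 T2 + (\<gamma>1 T1 - \<gamma>2 0)" using T by (simp add: cat2_def)
    then have "cong1 (cat2 \<gamma>1 T1 \<gamma>2 (T1 + T2)) (\<gamma>2 T2)" using n by (simp add: cong1_def)
    then show ?thesis using g2 by (auto intro: cong1_trans)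
  qed
  have "(INF \<gamma>\<in>{\<gamma>. abs_cont_on \<gamma> 0 (T1 + T2) \<and> \<gamma> 0 = x \<and> cong1 (\<gamma> (T1 + T2)) y}. action U \<gamma> 0 (T1 + T2))
      \<le> action U (cat2 \<gamma>1 T1 \<gamma>2) 0 (T1 + T2)"
    by (rule INF_lower) (use ac c0 cT in simp)
  also have "\<dots> = action U \<gamma>1 0 T1 + action U \<gamma>2 0 T2" by (rule cat2_action[of U \<gamma>1 T1 \<gamma>2 T2, OF per n T])
  finally show "(INF \<gamma>\<in>{\<gamma>. abs_cont_on \<gamma> 0 (T1 + T2) \<and> \<gamma> 0 = x \<and> cong1 (\<gamma> (T1 + T2)) y}. action U \<gamma> 0 (T1 + T2))
      \<le> action U \<gamma>1 0 T1 + action U \<gamma>2 0 T2" .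
qed (rule action_nonneg)+

lemma minact_rest:
  assumes per: "\<And>x. deriv U (x + 1) = deriv U x" and z: "deriv U z = 0" and T: "0 \<le> T" "T \<le> T'"
  shows "minact U T' z y \<le> minact U T z y"
proof -
  have 1: "minact U ((T' - T) + T) z y \<le> minact U (T' - T) z z + minact U T z y"
    by (rule minact_concat[OF per]) (use T in auto)
  have "minact U (T' - T) z z \<le> action U (\<lambda>s. z) 0 (T' - T)"
    by (rule minact_le) (auto simp: ac_const cong1_refl)
  also have "\<dots> = 0" by (rule action_const[OF z])
  finally have 2: "minact U (T' - T) z z \<le> 0" .
  have "minact U (T' - T) z z + minact U T z y \<le> 0 + minact U T z y" using 2 by (rule add_right_mono)
  then show ?thesis using 1 by simp
qed

lemma peierls_eq:
  assumes per: "\<And>x. deriv U (x + 1) = deriv U x" and z: "deriv U z = 0"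
  shows "peierls U y z = (INF T\<in>{0..}. minact U T z y)"
  unfolding peierls_def
proof (rule antisym)
  show "(INF T\<in>{0..}. minact U T z y) \<le> Liminf at_top (\<lambda>T. minact U T z y)"
  proof (rule Liminf_bounded)
    show "\<forall>\<^sub>F T in at_top. (INF T\<in>{0..}. minact U T z y) \<le> minact U T z y"
      unfolding eventually_at_top_linorder by (intro exI[of _ 0] allI impI INF_lower) simp
  qed
  show "Liminf at_top (\<lambda>T. minact U T z y) \<le> (INF T\<in>{0..}. minact U T z y)"
  proof (rule INF_greatest)
    fix T0 :: real assume T0: "T0 \<in> {0..}"
    show "Liminf at_top (\<lambda>T. minact U T z y) \<le> minact U T0 z y"
    proof (rule Liminf_le)
      show "\<forall>\<^sub>F T in at_top. minact U T z y \<le> minact U T0 z y"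
        unfolding eventually_at_top_linorder
        by (intro exI[of _ T0] allI impI minact_rest[OF per z]) (use T0 in auto)
    qed simp
  qed
qed




lemma le_c_plus_INF:
  fixes c X :: ereal
  assumes "\<And>i. i \<in> I \<Longrightarrow> X \<le> c + f i" "c \<noteq> -\<infinity>" "\<And>i. i \<in> I \<Longrightarrow> 0 \<le> f i"
  shows "X \<le> c + (INF i\<in>I. f i)"
proof (cases "I = {}")
  case True
  then have "c + (INF i\<in>I. f i) = \<infinity>" using assms(2) by (simp add: top_ereal_def)
  then show ?thesis by (rule ssubst[where P="\<lambda>u. X \<le> u"]) simp
next
  case False
  have "X \<le> (INF i\<in>I. c + f i)" using assms(1) by (rule INF_greatest)
  also have "\<dots> = c + (INF i\<in>I. f i)" using False assms(2,3) by (rule INF_ereal_add_right)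
  finally show ?thesis .
qed

lemma LO_peierls:
  assumes per: "\<And>x. deriv U (x + 1) = deriv U x" and z: "deriv U z = 0" and zr: "z \<in> {0..<1}"
    and c: "c \<noteq> -\<infinity>" and t: "0 \<le> t"
  shows "LO U t (\<lambda>x. c + peierls U x z) y = c + peierls U y z"
proof -
  define P where "P x = (INF T\<in>{0..}. minact U T z x)" for x
  have Peq: "peierls U x z = P x" for x unfolding P_def by (rule peierls_eq[OF per z])
  have P0: "0 \<le> P x" for x unfolding P_def by (rule INF_greatest) (rule minact_nonneg)
  have A: "P y \<le> P x + minact U t x y" for x
  proof -
    have "P y \<le> (INF T\<in>{0..}. minact U T z x + minact U t x y)"
    proof (rule INF_greatest)
      fix T :: real assume T: "T \<in> {0..}"
      have "P y \<le> minact U (T + t) z y" unfolding P_def by (rule INF_lower) (use T t in simp)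
      also have "\<dots> \<le> minact U T z x + minact U t x y" by (rule minact_concat[OF per]) (use T t in auto)
      finally show "P y \<le> minact U T z x + minact U t x y" .
    qed
    also have "\<dots> = P x + minact U t x y" unfolding P_def
      by (rule INF_ereal_add_left) (auto simp: minact_nonneg ereal_infty_less_eq2(2) intro: order.trans[OF _ minact_nonneg])
    finally show ?thesis .
  qed
  have ge: "c + P y \<le> LO U t (\<lambda>x. c + peierls U x z) y"
    unfolding LO_def Peq
  proof (rule INF_greatest)
    fix x :: real
    have "c + P y \<le> c + (P x + minact U t x y)" using A by (rule add_left_mono)
    then show "c + P y \<le> c + P x + minact U t x y" by (simp add: add.assoc)
  qed
  have le: "LO U t (\<lambda>x. c + peierls U x z) y \<le> c + P y"
    unfolding P_def
  proof (rule le_c_plus_INF[OF _ c])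
    fix T :: real assume T: "T \<in> {0..}"
    show "LO U t (\<lambda>x. c + peierls U x z) y \<le> c + minact U T z y"
      unfolding minact_def
    proof (rule le_c_plus_INF[OF _ c])
      fix \<gamma> assume g: "\<gamma> \<in> {\<gamma>. abs_cont_on \<gamma> 0 T \<and> \<gamma> 0 = z \<and> cong1 (\<gamma> T) y}"
      show "LO U t (\<lambda>x. c + peierls U x z) y \<le> c + action U \<gamma> 0 T"
      proof (cases "t \<le> T")
        case True
        define s where "s = T - t"
        have s: "0 \<le> s" "s \<le> T" using True t unfolding s_def by auto
        define x0 where "x0 = \<gamma> s - of_int \<lfloor>\<gamma> s\<rfloor>"
        have x0: "x0 \<in> {0..<1}" unfolding x0_def by (rule frac_range)
        have "LO U t (\<lambda>x. c + peierls U x z) y \<le> c + peierls U x0 z + minact U t x0 y"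
          unfolding LO_def by (rule INF_lower[OF x0])
        also have "peierls U x0 z \<le> action U \<gamma> 0 s"
        proof -
          have "peierls U x0 z \<le> minact U s z x0" unfolding Peq P_def by (rule INF_lower) (use s in simp)
          also have "\<dots> \<le> action U \<gamma> 0 s"
            by (rule minact_le) (use g s in \<open>auto intro: ac_sub simp: x0_def cong1_frac\<close>)
          finally show ?thesis .
        qed
        also have "minact U t x0 y \<le> action U \<gamma> s T"
        proof -
          define g2 where "g2 = (\<lambda>r. \<gamma> (r + s) + (- of_int \<lfloor>\<gamma> s\<rfloor>))"
          have ac2: "abs_cont_on \<gamma> (0 + s) (t + s)" using g s unfolding s_def by (auto intro: ac_sub)
          have "minact U t x0 y \<le> action U g2 0 t"
          proof (rule minact_le)
            show "abs_cont_on g2 0 t" unfolding g2_def by (rule ac_shift[OF ac2])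
            show "g2 0 = x0" unfolding g2_def x0_def by simp
            have "cong1 (g2 t) (\<gamma> T)" unfolding g2_def s_def cong1_def by simp
            then show "cong1 (g2 t) y" using g by (auto intro: cong1_trans)
          qed
          also have "action U g2 0 t = action U (\<lambda>r. \<gamma> (r + s)) 0 t"
            unfolding g2_def by (rule action_shift_space[OF per]) simp
          also have "\<dots> = action U \<gamma> (0 + s) (t + s)" by (rule action_shift_time)
          finally show ?thesis unfolding s_def by simp
        qed
        also have "c + action U \<gamma> 0 s + action U \<gamma> s T = c + action U \<gamma> 0 T"
          using action_split[of 0 s T U \<gamma>] s by (simp add: add.assoc)
        finally show ?thesis by (simp add: add_mono)
      next
        case False
        have "LO U t (\<lambda>x. c + peierls U x z) y \<le> c + peierls U z z + minact U t z y"
          unfolding LO_def by (rule INF_lower[OF zr])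
        also have "peierls U z z \<le> 0"
        proof -
          have "peierls U z z \<le> minact U 0 z z" unfolding Peq P_def by (rule INF_lower) simp
          also have "\<dots> \<le> action U (\<lambda>s. z) 0 0" by (rule minact_le) (auto simp: ac_const cong1_refl)
          also have "\<dots> = 0" by (rule action_point)
          finally show ?thesis .
        qed
        also have "minact U t z y \<le> minact U T z y"
          by (rule minact_rest[OF per z]) (use g False T in auto)
        also have "minact U T z y \<le> action U \<gamma> 0 T" by (rule minact_le) (use g in auto)
        finally show ?thesis by (simp add: add_mono)
      qed
    next
      show "\<And>\<gamma>. \<gamma> \<in> {\<gamma>. abs_cont_on \<gamma> 0 T \<and> \<gamma> 0 = z \<and> cong1 (\<gamma> T) y} \<Longrightarrow> 0 \<le> action U \<gamma> 0 T"
        by (rule action_nonneg)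
    qed
  next
    show "\<And>T. T \<in> {0..} \<Longrightarrow> 0 \<le> minact U T z y" by (rule minact_nonneg)
  qed
  show ?thesis using ge le Peq by (simp add: antisym)
qed

lemma LO_MIN:
  fixes f :: "'j \<Rightarrow> real \<Rightarrow> ereal"
  assumes J: "finite J" "J \<noteq> {}"
  shows "LO U t (\<lambda>x. MIN j\<in>J. f j x) y = (MIN j\<in>J. LO U t (f j) y)"
proof -
  have "(MIN j\<in>J. f j x) + m = (MIN j\<in>J. f j x + m)" for x and m :: ereal
  proof -
    have "mono (\<lambda>u::ereal. u + m)" by (rule monoI) (rule add_right_mono)
    then have "(\<lambda>u. u + m) (Min ((\<lambda>j. f j x) ` J)) = Min ((\<lambda>u. u + m) ` ((\<lambda>j. f j x) ` J))"
      by (rule mono_Min_commute) (use J in auto)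
    then show ?thesis by (simp add: image_image)
  qed
  then have "LO U t (\<lambda>x. MIN j\<in>J. f j x) y = (INF x\<in>{0..<1}. MIN j\<in>J. f j x + minact U t x y)"
    unfolding LO_def by simp
  also have "\<dots> = (INF x\<in>{0..<1}. INF j\<in>J. f j x + minact U t x y)"
    using J by (simp add: Min_Inf)
  also have "\<dots> = (INF j\<in>J. INF x\<in>{0..<1}. f j x + minact U t x y)" by (rule INF_commute)
  also have "\<dots> = (MIN j\<in>J. LO U t (f j) y)" unfolding LO_def using J by (simp add: Min_Inf)
  finally show ?thesis .
qed




lemma crit_set_eq: "crit_config U k q \<Longrightarrow> crit_set U = q ` {1..2*k}"
  unfolding crit_config_def crit_set_def by blast

lemma crit_setD: "z \<in> crit_set U \<Longrightarrow> deriv U z = 0 \<and> z \<in> {0..<1}"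
  unfolding crit_set_def by blast

lemma crit_zero: assumes "crit_config U k q" shows "deriv U 0 = 0"
proof -
  have "q 1 \<in> q ` {1..2*k}" using assms unfolding crit_config_def by auto
  then have "q 1 \<in> crit_set U" using crit_set_eq[OF assms] by simp
  moreover have "q 1 = 0" using assms unfolding crit_config_def by simp
  ultimately show ?thesis using crit_setD by auto
qed

lemma xmin_crit:
  assumes "crit_config U k q" "j \<in> {1..k}"
  shows "xmin q j \<in> crit_set U"
proof -
  have "2 * j \<in> {1..2*k}" using assms(2) by auto
  then show ?thesis unfolding xmin_def crit_set_eq[OF assms(1)] by blast
qed

lemma maneR_nonneg: "0 \<le> maneR U y x"
  unfolding maneR_def by (rule INF_greatest) (rule action_nonneg)

lemma Wcoef_nonneg:
  assumes "crit_config U k q"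
  shows "0 \<le> Wcoef U k q i"
proof -
  have k: "finite {1..k}" "{1..k} \<noteq> {}" using assms unfolding crit_config_def by auto
  have "0 \<le> hRt U k q i j + hLt U q i j" for j
    unfolding hRt_def hLt_def Let_def by (auto simp: maneR_nonneg)
  then show ?thesis unfolding Wcoef_def using k by (simp add: Min_ge_iff)
qed

lemma Wfun_LO:
  assumes sm: "smooth_fun U" and sk: "skew_periodic U" and cc: "crit_config U k q" and t: "0 \<le> t"
  shows "LO U t (Wfun U k q) y = Wfun U k q y"
proof -
  have per: "\<And>x. deriv U (x + 1) = deriv U x" by (rule dU_periodic[OF sk])
  have k: "finite {1..k}" "{1..k} \<noteq> {}" using cc unfolding crit_config_def by auto
  have W: "Wfun U k q = (\<lambda>x. MIN j\<in>{1..k}. (\<lambda>j x. Wcoef U k q j + peierls U x (xmin q j)) j x)"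
    by (rule ext) (simp add: Wfun_def)
  have "LO U t (Wfun U k q) y = (MIN j\<in>{1..k}. LO U t (\<lambda>x. Wcoef U k q j + peierls U x (xmin q j)) y)"
    unfolding W by (rule LO_MIN[OF k])
  also have "\<dots> = (MIN j\<in>{1..k}. Wcoef U k q j + peierls U y (xmin q j))"
  proof (rule arg_cong[where f=Min], rule image_cong[OF refl])
    fix j assume j: "j \<in> {1..k}"
    have z: "deriv U (xmin q j) = 0" "xmin q j \<in> {0..<1}" using crit_setD[OF xmin_crit[OF cc j]] by auto
    have c: "Wcoef U k q j \<noteq> -\<infinity>" using Wcoef_nonneg[OF cc, of j] by auto
    show "LO U t (\<lambda>x. Wcoef U k q j + peierls U x (xmin q j)) y = Wcoef U k q j + peierls U y (xmin q j)"
      by (rule LO_peierls[OF per z c t])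
  qed
  also have "\<dots> = Wfun U k q y" by (simp add: Wfun_def)
  finally show ?thesis .
qed

lemma ereal_diff_le: "ereal (a - b) \<le> P \<Longrightarrow> ereal a \<le> ereal b + P"
  by (cases P) auto

lemma wk_basic:
  assumes wk: "weak_KAM_neg U w" and ac: "abs_cont_on \<gamma> 0 T" and T: "0 \<le> T" and g0: "\<gamma> 0 = x"
    and gT: "cong1 (\<gamma> T) y"
  shows "ereal (w y) \<le> ereal (w x) + action U \<gamma> 0 T"
proof -
  have per: "\<And>x. w (x + 1) = w x" using wk unfolding weak_KAM_neg_def by blast
  have "ereal (w (\<gamma> T) - w (\<gamma> 0)) \<le> action U \<gamma> 0 T"
    using wk ac T unfolding weak_KAM_neg_def by blast
  moreover have "w (\<gamma> T) = w y" by (rule periodic_cong1[where f=w, OF per gT])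
  ultimately show ?thesis using g0 by (intro ereal_diff_le) simp
qed

lemma wk_minact:
  assumes wk: "weak_KAM_neg U w" and T: "0 \<le> T"
  shows "ereal (w y) \<le> ereal (w x) + minact U T x y"
  unfolding minact_def
  by (rule le_c_plus_INF) (auto intro: wk_basic[OF wk _ T] action_nonneg)

lemma wk_mane:
  assumes wk: "weak_KAM_neg U w"
  shows "ereal (w y) \<le> ereal (w x) + mane U y x"
  unfolding mane_def
  by (rule le_c_plus_INF) (auto intro: wk_basic[OF wk] action_nonneg)

lemma wk_peierls:
  assumes wk: "weak_KAM_neg U w"
  shows "ereal (w y) \<le> ereal (w x) + peierls U y x"
proof (rule ereal_diff_le)
  show "ereal (w y - w x) \<le> peierls U y x"
    unfolding peierls_def
  proof (rule Liminf_bounded)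
    show "\<forall>\<^sub>F T in at_top. ereal (w y - w x) \<le> minact U T x y"
      unfolding eventually_at_top_linorder
    proof (intro exI[of _ 0] allI impI)
      fix T :: real assume "0 \<le> T"
      then have "ereal (w y) \<le> ereal (w x) + minact U T x y" by (rule wk_minact[OF wk])
      then show "ereal (w y - w x) \<le> minact U T x y" by (cases "minact U T x y") auto
    qed
  qed
qed




definition pcd :: "(real \<Rightarrow> real) \<Rightarrow> real \<Rightarrow> real \<Rightarrow> real set \<Rightarrow> (real \<Rightarrow> real) \<Rightarrow> bool" where
  "pcd \<gamma> a b S D \<longleftrightarrow> finite S \<and> continuous_on {a..b} \<gamma> \<and>
     (\<forall>x\<in>{a..b}-S. (\<gamma> has_vector_derivative D x) (at x)) \<and> continuous_on ({a..b}-S) D"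

lemma pcd_exists:
  assumes "\<gamma> piecewise_C1_differentiable_on {a..b}"
  shows "\<exists>S D. pcd \<gamma> a b S D"
  using assms unfolding piecewise_C1_differentiable_on_def C1_differentiable_on_def pcd_def by blast

definition Ltf :: "(real \<Rightarrow> real) \<Rightarrow> (real \<Rightarrow> real) \<Rightarrow> real set \<Rightarrow> (real \<Rightarrow> real) \<Rightarrow> real \<Rightarrow> real \<Rightarrow> real \<Rightarrow> real" where
  "Ltf U \<gamma> S D a b x = indicator ({a..b} - S) x * Lag U (D x) (\<gamma> x)"

lemma Lag_nonneg: "0 \<le> Lag U s x" unfolding Lag_def by simp

lemma Ltf_nonneg: "0 \<le> Ltf U \<gamma> S D a b x"
  unfolding Ltf_def by (simp add: Lag_nonneg)

lemma Ltf_meas: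
  assumes p: "pcd \<gamma> a b S D" and dU: "\<And>x. isCont (deriv U) x"
  shows "Ltf U \<gamma> S D a b \<in> borel_measurable borel"
proof -
  have fin: "finite S" using p unfolding pcd_def by simp
  have cg: "continuous_on ({a..b} - S) \<gamma>" using p unfolding pcd_def by (auto intro: continuous_on_subset)
  have cD: "continuous_on ({a..b} - S) D" using p unfolding pcd_def by simp
  have cdU: "continuous_on ({a..b} - S) (\<lambda>x. deriv U (\<gamma> x))"
    by (rule continuous_on_compose2[of UNIV "deriv U"]) (auto intro: continuous_at_imp_continuous_on dU cg)
  have c: "continuous_on ({a..b} - S) (\<lambda>x. Lag U (D x) (\<gamma> x))"
    unfolding Lag_def by (intro continuous_intros cD cdU) auto
  have S: "{a..b} - S \<in> sets borel" using fin by (intro sets.Diff borel_closed finite_imp_closed[OF fin]) auto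
  have "(\<lambda>x. indicator ({a..b} - S) x *\<^sub>R Lag U (D x) (\<gamma> x)) \<in> borel_measurable borel"
    by (rule borel_measurable_continuous_on_indicator[OF S c])
  then show ?thesis unfolding Ltf_def by simp
qed

lemma LI_Ltf:
  assumes p: "pcd \<gamma> a b S D"
  shows "LI U \<gamma> a b = (\<integral>\<^sup>+x. ennreal (Ltf U \<gamma> S D a b x) \<partial>lborel)"
  unfolding LI_def
proof (rule nn_integral_cong_AE)
  have fin: "finite S" using p unfolding pcd_def by simp
  have "AE x in lborel. x \<notin> S" by (rule AE_not_in) (rule finite_imp_null_set_lborel[OF fin])
  then show "AE x in lborel. ennreal (Lag U (vector_derivative \<gamma> (at x)) (\<gamma> x)) * indicator {a..b} x =
      ennreal (Ltf U \<gamma> S D a b x)"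
  proof eventually_elim
    case (elim x)
    show ?case
    proof (cases "x \<in> {a..b}")
      case True
      then have "(\<gamma> has_vector_derivative D x) (at x)" using p elim unfolding pcd_def by auto
      then have "vector_derivative \<gamma> (at x) = D x" by (rule vector_derivative_at)
      then show ?thesis using True elim unfolding Ltf_def by simp
    next
      case False
      then show ?thesis unfolding Ltf_def by (auto simp: indicator_def)
    qed
  qed
qed

lemma Ltf_has_integral:
  assumes p: "pcd \<gamma> a b S D" and dU: "\<And>x. isCont (deriv U) x" and I: "action U \<gamma> a b = ereal I"
  shows "(Ltf U \<gamma> S D a b has_integral I) {a..b}" and "0 \<le> I"
proof -
  show I0: "0 \<le> I" using action_nonneg[of U \<gamma> a b] I by simp
  have "LI U \<gamma> a b = e2ennreal (enn2ereal (LI U \<gamma> a b))" by simp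
  also have "\<dots> = ennreal I" using I by (simp add: action_LI)
  finally have "(\<integral>\<^sup>+x. ennreal (Ltf U \<gamma> S D a b x) \<partial>lborel) = ennreal I" using LI_Ltf[OF p] by simp
  then have "(Ltf U \<gamma> S D a b has_integral I) UNIV"
    by (intro nn_integral_has_integral Ltf_meas[OF p dU] Ltf_nonneg I0)
  moreover have "Ltf U \<gamma> S D a b = (\<lambda>x. if x \<in> {a..b} then Ltf U \<gamma> S D a b x else 0)"
    unfolding Ltf_def by (auto simp: fun_eq_iff)
  ultimately show "(Ltf U \<gamma> S D a b has_integral I) {a..b}"
    using has_integral_restrict_UNIV[of "{a..b}" "Ltf U \<gamma> S D a b" I] by simp
qed

lemma pcd_ftc:
  assumes p: "pcd \<gamma> a b S D" and xy: "a \<le> x" "x \<le> y" "y \<le> b"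
  shows "(D has_integral (\<gamma> y - \<gamma> x)) {x..y}"
proof (rule fundamental_theorem_of_calculus_interior_strong)
  show "finite S" using p unfolding pcd_def by simp
  show "x \<le> y" by fact
  show "continuous_on {x..y} \<gamma>" using p xy unfolding pcd_def by (auto intro: continuous_on_subset)
  fix s assume "s \<in> {x<..<y} - S"
  then show "(\<gamma> has_vector_derivative D s) (at s)" using p xy unfolding pcd_def by auto
qed




lemma tele:
  assumes h: "adm a b n as bs" and mono: "\<And>x y. a \<le> x \<Longrightarrow> x \<le> y \<Longrightarrow> y \<le> b \<Longrightarrow> F x \<le> (F y :: real)"
    and ab: "a \<le> b"
  shows "(\<Sum>i<n. F (bs i) - F (as i)) \<le> F b - F a"
proof -
  have aux: "adm a b (Suc m) as bs \<Longrightarrow> (\<Sum>i<Suc m. F (bs i) - F (as i)) \<le> F (bs m) - F a" for m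
  proof (induction m)
    case 0
    then have "a \<le> as 0" "as 0 \<le> bs 0" "bs 0 \<le> b" unfolding adm_def by auto
    then show ?case using mono[of a "as 0"] by simp
  next
    case (Suc m)
    then have am: "adm a b (Suc m) as bs" unfolding adm_def by auto
    have c: "a \<le> bs m" "bs m \<le> as (Suc m)" "as (Suc m) \<le> b" "a \<le> as m" "as m \<le> bs m"
      using Suc.prems unfolding adm_def by (auto dest: spec[of _ m])
    have "(\<Sum>i<Suc (Suc m). F (bs i) - F (as i)) = (\<Sum>i<Suc m. F (bs i) - F (as i)) + (F (bs (Suc m)) - F (as (Suc m)))"
      by simp
    also have "\<dots> \<le> F (bs m) - F a + (F (bs (Suc m)) - F (as (Suc m)))" using Suc.IH[OF am] by simp
    also have "\<dots> \<le> F (bs (Suc m)) - F a" using mono[of "bs m" "as (Suc m)"] c by simp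
    finally show ?case .
  qed
  show ?thesis
  proof (cases n)
    case 0
    then show ?thesis using mono[of a b] ab by simp
  next
    case (Suc m)
    then have c: "a \<le> bs m" "bs m \<le> b" using h unfolding adm_def by (auto dest: spec[of _ m])
    have "(\<Sum>i<n. F (bs i) - F (as i)) \<le> F (bs m) - F a" using aux h Suc by simp
    also have "\<dots> \<le> F b - F a" using mono[of "bs m" b] c by simp
    finally show ?thesis .
  qed
qed

lemma ac_dom:
  assumes mono: "\<And>x y. a \<le> x \<Longrightarrow> x \<le> y \<Longrightarrow> y \<le> b \<Longrightarrow> F x \<le> (F y :: real)" and ab: "a \<le> b"
    and dom: "\<And>l. l > 0 \<Longrightarrow> \<exists>K\<ge>0. \<forall>x y. a \<le> x \<longrightarrow> x \<le> y \<longrightarrow> y \<le> b \<longrightarrow> \<bar>f y - f x\<bar> \<le> K * (y - x) + (F y - F x) / l"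
  shows "abs_cont_on f a b"
proof (rule acI)
  fix e :: real assume e: "e > 0"
  define B where "B = F b - F a"
  have B: "0 \<le> B" using mono[of a b] ab unfolding B_def by simp
  define l where "l = 2 * (B + 1) / e"
  have l: "l > 0" using B e unfolding l_def by simp
  obtain K where K: "K \<ge> 0" "\<And>x y. a \<le> x \<Longrightarrow> x \<le> y \<Longrightarrow> y \<le> b \<Longrightarrow> \<bar>f y - f x\<bar> \<le> K * (y - x) + (F y - F x) / l"
    using dom[OF l] by blast
  define d where "d = e / (2 * (K + 1))"
  show "\<exists>d>0. \<forall>n as bs. adm a b n as bs \<longrightarrow> (\<Sum>i<n. bs i - as i) < d \<longrightarrow> (\<Sum>i<n. \<bar>f (bs i) - f (as i)\<bar>) < e"
  proof (intro exI[of _ d] conjI allI impI)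
    show "d > 0" using e K unfolding d_def by simp
    fix n as bs assume h: "adm a b n as bs" and hs: "(\<Sum>i<n. bs i - as i) < d"
    have "(\<Sum>i<n. \<bar>f (bs i) - f (as i)\<bar>) \<le> (\<Sum>i<n. K * (bs i - as i) + (F (bs i) - F (as i)) / l)"
    proof (rule sum_mono)
      fix i assume "i \<in> {..<n}"
      then have "a \<le> as i" "as i \<le> bs i" "bs i \<le> b" using h unfolding adm_def by auto
      then show "\<bar>f (bs i) - f (as i)\<bar> \<le> K * (bs i - as i) + (F (bs i) - F (as i)) / l" by (rule K(2))
    qed
    also have "\<dots> = K * (\<Sum>i<n. bs i - as i) + (\<Sum>i<n. F (bs i) - F (as i)) / l"
      by (simp add: sum.distrib sum_distrib_left sum_divide_distrib)
    also have "\<dots> \<le> K * d + B / l"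
    proof (rule add_mono)
      show "K * (\<Sum>i<n. bs i - as i) \<le> K * d" using hs K by (intro mult_left_mono) auto
      show "(\<Sum>i<n. F (bs i) - F (as i)) / l \<le> B / l"
        using tele[where F=F, OF h mono ab] l unfolding B_def by (simp add: divide_right_mono)
    qed
    also have "K * d < e / 2" using e K unfolding d_def by (simp add: field_simps)
    also have "B / l < e / 2" using e B unfolding l_def by (simp add: field_simps)
    finally show "(\<Sum>i<n. \<bar>f (bs i) - f (as i)\<bar>) < e" by simp
  qed
qed

lemma abs_le_quad:
  fixes v l :: real assumes "l > 0" shows "\<bar>v\<bar> \<le> l + v^2 / (4 * l)"
proof -
  have "0 \<le> (\<bar>v\<bar> - 2 * l)^2" by simp
  then have "4 * l * \<bar>v\<bar> \<le> 4 * l^2 + v^2" by (simp add: power2_eq_square algebra_simps)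
  then show ?thesis using assms by (simp add: field_simps power2_eq_square)
qed

lemma lin_le_quad:
  fixes v l \<sigma> :: real assumes "\<sigma>^2 = 1" shows "l * \<sigma> * v - l^2 \<le> v^2 / 4"
proof -
  have "0 \<le> (v / 2 - l * \<sigma>)^2" by simp
  moreover have "(v / 2 - l * \<sigma>)^2 = v^2 / 4 - l * \<sigma> * v + l^2 * \<sigma>^2"
    by (simp add: power2_eq_square algebra_simps)
  ultimately show ?thesis using assms by simp
qed




lemma ac_pcd:
  assumes p: "pcd \<gamma> a b S D" and dU: "\<And>x. isCont (deriv U) x" and C: "\<And>x. \<bar>deriv U x\<bar> \<le> C"
    and I: "action U \<gamma> a b = ereal I" and ab: "a \<le> b"
  shows "abs_cont_on \<gamma> a b"
proof -
  define Lt where "Lt = Ltf U \<gamma> S D a b"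
  have LtI: "(Lt has_integral I) {a..b}" unfolding Lt_def by (rule Ltf_has_integral(1)[OF p dU I])
  have Lt0: "0 \<le> Lt x" for x unfolding Lt_def by (rule Ltf_nonneg)
  have C0: "0 \<le> C" using C[of 0] by simp
  have fin: "finite S" using p unfolding pcd_def by simp
  define F where "F x = integral {a..x} Lt" for x
  have Fdiff: "(Lt has_integral (F y - F x)) {x..y}" if xy: "a \<le> x" "x \<le> y" "y \<le> b" for x y
  proof -
    have i1: "Lt integrable_on {a..y}"
      by (rule integrable_on_subinterval[OF has_integral_integrable[OF LtI]]) (use xy in simp)
    have e: "integral {a..x} Lt + integral {x..y} Lt = integral {a..y} Lt"
      by (rule Henstock_Kurzweil_Integration.integral_combine[OF xy(1,2) i1])
    have i2: "Lt integrable_on {x..y}"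
      by (rule integrable_on_subinterval[OF i1]) (use xy in simp)
    have e2: "integral {x..y} Lt = F y - F x" unfolding F_def using e by linarith
    show ?thesis using integrable_integral[OF i2] unfolding e2 .
  qed
  have mono: "F x \<le> F y" if "a \<le> x" "x \<le> y" "y \<le> b" for x y
  proof -
    have "0 \<le> F y - F x" by (rule has_integral_nonneg[OF Fdiff[OF that]]) (rule Lt0)
    then show ?thesis by simp
  qed
  show ?thesis
  proof (rule ac_dom[where F=F, OF mono ab])
    fix l :: real assume l: "l > 0"
    show "\<exists>K\<ge>0. \<forall>x y. a \<le> x \<longrightarrow> x \<le> y \<longrightarrow> y \<le> b \<longrightarrow> \<bar>\<gamma> y - \<gamma> x\<bar> \<le> K * (y - x) + (F y - F x) / l"
    proof (intro exI[of _ "C + l"] conjI allI impI)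
      show "0 \<le> C + l" using C0 l by simp
      fix x y assume xy: "a \<le> x" "x \<le> y" "y \<le> b"
      define Dt where "Dt s = (if s \<in> S then 0 else D s)" for s
      have DtI: "(Dt has_integral (\<gamma> y - \<gamma> x)) {x..y}"
        by (rule has_integral_spike_finite[OF fin _ pcd_ftc[OF p xy]]) (simp add: Dt_def)
      define g where "g s = (C + l) + (1 / l) * Lt s" for s
      have gI: "(g has_integral ((y - x) * (C + l) + (1 / l) * (F y - F x))) {x..y}"
        unfolding g_def
        using has_integral_add[OF has_integral_const_real[of "C + l" x y] has_integral_mult_right[OF Fdiff[OF xy], of "1 / l"]]
        using xy by (simp add: content_real)
      have bnd: "\<bar>Dt s\<bar> \<le> g s" if s: "s \<in> {x..y}" for s
      proof (cases "s \<in> S")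
        case True
        then show ?thesis unfolding Dt_def g_def using Lt0[of s] l C0 by simp
      next
        case False
        then have sab: "s \<in> {a..b} - S" using s xy by auto
        define u where "u = deriv U (\<gamma> s)"
        have Lts: "Lt s = (D s + u)^2 / 4" using sab unfolding Lt_def Ltf_def Lag_def u_def by simp
        have "\<bar>D s\<bar> \<le> \<bar>D s + u\<bar> + \<bar>u\<bar>" by linarith
        also have "\<bar>D s + u\<bar> \<le> l + (D s + u)^2 / (4 * l)" by (rule abs_le_quad[OF l])
        also have "\<bar>u\<bar> \<le> C" unfolding u_def by (rule C)
        finally have "\<bar>D s\<bar> \<le> C + l + (1 / l) * Lt s" unfolding Lts using l by (simp add: field_simps)
        then show ?thesis unfolding Dt_def g_def using False by simp
      qed
      have up: "\<gamma> y - \<gamma> x \<le> (y - x) * (C + l) + (1 / l) * (F y - F x)"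
        by (rule has_integral_le[OF DtI gI]) (metis abs_le_iff bnd)
      have lo: "- ((y - x) * (C + l) + (1 / l) * (F y - F x)) \<le> \<gamma> y - \<gamma> x"
        by (rule has_integral_le[OF has_integral_neg[OF gI] DtI]) (metis abs_le_iff bnd minus_le_iff)
      show "\<bar>\<gamma> y - \<gamma> x\<bar> \<le> (C + l) * (y - x) + (F y - F x) / l"
      proof -
        have G: "(y - x) * (C + l) + (1 / l) * (F y - F x) = (C + l) * (y - x) + (F y - F x) / l"
          by (simp add: algebra_simps diff_divide_distrib)
        show ?thesis using up lo unfolding G abs_le_iff by linarith
      qed
    qed
  qed
qed

lemma lb_pcd:
  assumes p: "pcd \<gamma> a b S D" and dU: "\<And>x. isCont (deriv U) x"
    and I: "action U \<gamma> a b = ereal I" and ab: "a \<le> b" and sg: "\<sigma>^2 = 1"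
  shows "l * \<sigma> * (\<gamma> b - \<gamma> a) + l * integral {a..b} (\<lambda>s. \<sigma> * deriv U (\<gamma> s)) - l^2 * (b - a) \<le> I"
proof -
  define Lt where "Lt = Ltf U \<gamma> S D a b"
  have LtI: "(Lt has_integral I) {a..b}" unfolding Lt_def by (rule Ltf_has_integral(1)[OF p dU I])
  have fin: "finite S" using p unfolding pcd_def by simp
  have c1: "(D has_integral (\<gamma> b - \<gamma> a)) {a..b}" by (rule pcd_ftc[OF p order_refl ab order_refl])
  have cg: "continuous_on {a..b} \<gamma>" using p unfolding pcd_def by simp
  have cu: "continuous_on {a..b} (\<lambda>s. \<sigma> * deriv U (\<gamma> s))"
  proof -
    have cdU: "continuous_on {a..b} (\<lambda>x. deriv U (\<gamma> x))"
      by (rule continuous_on_compose2[of UNIV "deriv U"]) (auto intro: continuous_at_imp_continuous_on dU cg)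
    show ?thesis by (intro continuous_intros cdU)
  qed
  have c2: "((\<lambda>s. \<sigma> * deriv U (\<gamma> s)) has_integral integral {a..b} (\<lambda>s. \<sigma> * deriv U (\<gamma> s))) {a..b}"
    by (rule integrable_integral[OF integrable_continuous_interval[OF cu]])
  define J where "J = integral {a..b} (\<lambda>s. \<sigma> * deriv U (\<gamma> s))"
  have hI: "((\<lambda>s. l * \<sigma> * D s + l * (\<sigma> * deriv U (\<gamma> s)) - l^2) has_integral
      (l * \<sigma> * (\<gamma> b - \<gamma> a) + l * J - (b - a) * l^2)) {a..b}"
    using has_integral_diff[OF has_integral_add[OF has_integral_mult_right[OF c1, of "l * \<sigma>"]
        has_integral_mult_right[OF c2, of l]] has_integral_const_real[of "l^2" a b]] ab
    unfolding J_def by (simp add: content_real)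
  define h where "h s = (if s \<in> S then 0 else l * \<sigma> * D s + l * (\<sigma> * deriv U (\<gamma> s)) - l^2)" for s
  have hI': "(h has_integral (l * \<sigma> * (\<gamma> b - \<gamma> a) + l * J - (b - a) * l^2)) {a..b}"
    by (rule has_integral_spike_finite[OF fin _ hI]) (simp add: h_def)
  have "l * \<sigma> * (\<gamma> b - \<gamma> a) + l * J - (b - a) * l^2 \<le> I"
  proof (rule has_integral_le[OF hI' LtI])
    fix s assume s: "s \<in> {a..b}"
    show "h s \<le> Lt s"
    proof (cases "s \<in> S")
      case True
      then show ?thesis unfolding h_def Lt_def Ltf_def by simp
    next
      case False
      have "l * \<sigma> * (D s + deriv U (\<gamma> s)) - l^2 \<le> (D s + deriv U (\<gamma> s))^2 / 4" by (rule lin_le_quad[OF sg])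
      then show ?thesis using False s unfolding h_def Lt_def Ltf_def Lag_def by (simp add: algebra_simps)
    qed
  qed
  then show ?thesis unfolding J_def by (simp add: algebra_simps)
qed




lemma escape:
  assumes dUc: "\<And>x. isCont (deriv U) x" and per: "\<And>x. deriv U (x + 1) = deriv U x" and z0: "deriv U 0 = 0"
    and gc: "\<And>a. a \<le> 0 \<Longrightarrow> continuous_on {a..0} \<gamma>"
    and pc: "\<And>a b. a < b \<Longrightarrow> b \<le> 0 \<Longrightarrow> \<exists>S D. pcd \<gamma> a b S D"
    and act: "\<And>a b. a < b \<Longrightarrow> b \<le> 0 \<Longrightarrow> action U \<gamma> a b = ereal (w (\<gamma> b) - w (\<gamma> a))"
    and M: "\<And>x. \<bar>w x\<bar> \<le> M" and \<delta>: "\<delta> > 0"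
  shows "\<exists>a<0. \<exists>p. deriv U p = 0 \<and> \<bar>\<gamma> a - p\<bar> < \<delta>"
proof (rule ccontr)
  assume "\<not> ?thesis"
  then have H: "\<And>a p. a < 0 \<Longrightarrow> deriv U p = 0 \<Longrightarrow> \<delta> \<le> \<bar>\<gamma> a - p\<bar>" by force
  have intcrit: "deriv U (of_int n) = 0" for n
    using periodic_int[where f="deriv U", OF per, of "of_int n" 0] z0 by simp
  have noint: "\<gamma> s \<noteq> of_int n" if "s < 0" for s n
    using H[OF that intcrit[of n]] \<delta> by auto
  have gc': "continuous_on {s..t} \<gamma>" if "s \<le> t" "t \<le> 0" for s t
    using gc[of s] that by (auto intro: continuous_on_subset)
  define N where "N = \<lfloor>\<gamma> (-1)\<rfloor>"
  have y1: "of_int N < \<gamma> (-1)" "\<gamma> (-1) < of_int N + 1"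
    using noint[of "-1" N] of_int_floor_le[of "\<gamma> (-1)"] unfolding N_def by (auto simp: order.order_iff_strict)
  have range: "of_int N < \<gamma> s \<and> \<gamma> s < of_int N + 1" if s: "s \<le> -1" for s
  proof (rule ccontr)
    assume "\<not> (of_int N < \<gamma> s \<and> \<gamma> s < of_int N + 1)"
    then consider "\<gamma> s \<le> of_int N" | "of_int N + 1 \<le> \<gamma> s" by linarith
    then show False
    proof cases
      case 1
      obtain x where "s \<le> x" "x \<le> -1" "\<gamma> x = of_int N"
        using IVT'[of \<gamma> s "of_int N" "-1"] 1 y1 s gc'[of s "-1"] by auto
      then show False using noint[of x N] by simp
    next
      case 2
      obtain x where "s \<le> x" "x \<le> -1" "\<gamma> x = of_int (N + 1)"
        using IVT2'[of \<gamma> "-1" "of_int (N + 1)" s] 2 y1 s gc'[of s "-1"] by auto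
      then show False using noint[of x "N + 1"] by simp
    qed
  qed
  define K where "K = {of_int N .. of_int N + 1} \<inter> (\<Inter>p\<in>{p. deriv U p = 0}. {x. \<delta> \<le> \<bar>x - p\<bar>})"
  have cK: "compact K" unfolding K_def
    by (intro compact_Int_closed compact_Icc closed_INT ballI closed_Collect_le continuous_intros)
  have inK: "\<gamma> s \<in> K" if "s \<le> -1" for s
    using range[OF that] H[of s] that unfolding K_def by auto
  have cdU: "continuous_on K (\<lambda>x. \<bar>deriv U x\<bar>)"
    by (intro continuous_at_imp_continuous_on ballI continuous_intros dUc)
  obtain x0 where x0: "x0 \<in> K" "\<And>x. x \<in> K \<Longrightarrow> \<bar>deriv U x0\<bar> \<le> \<bar>deriv U x\<bar>"
    using continuous_attains_inf[OF cK _ cdU] inK[of "-1"] by auto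
  define m where "m = \<bar>deriv U x0\<bar>"
  have m: "m > 0"
  proof (rule ccontr)
    assume "\<not> m > 0"
    then have "deriv U x0 = 0" unfolding m_def by simp
    then have "\<delta> \<le> \<bar>x0 - x0\<bar>" using x0(1) unfolding K_def by blast
    then show False using \<delta> by simp
  qed
  have mb: "m \<le> \<bar>deriv U (\<gamma> s)\<bar>" if "s \<le> -1" for s unfolding m_def by (rule x0(2)[OF inK[OF that]])
  define \<sigma> :: real where "\<sigma> = (if deriv U (\<gamma> (-1)) > 0 then 1 else -1)"
  have sg2: "\<sigma>^2 = 1" unfolding \<sigma>_def by simp
  have s1: "\<sigma> * deriv U (\<gamma> (-1)) = \<bar>deriv U (\<gamma> (-1))\<bar>" unfolding \<sigma>_def by auto
  have sg: "m \<le> \<sigma> * deriv U (\<gamma> s)" if s: "s \<le> -1" for s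
  proof (rule ccontr)
    assume a: "\<not> m \<le> \<sigma> * deriv U (\<gamma> s)"
    have "\<bar>\<sigma> * deriv U (\<gamma> s)\<bar> = \<bar>deriv U (\<gamma> s)\<bar>" unfolding \<sigma>_def by simp
    then have neg: "\<sigma> * deriv U (\<gamma> s) \<le> 0" using a mb[OF s] by linarith
    have pos: "0 \<le> \<sigma> * deriv U (\<gamma> (-1))" using s1 by simp
    have cf: "continuous_on {s..-1} (\<lambda>x. \<sigma> * deriv U (\<gamma> x))"
    proof -
      have "continuous_on {s..-1} (\<lambda>x. deriv U (\<gamma> x))"
        by (rule continuous_on_compose2[of UNIV "deriv U"]) (auto intro: continuous_at_imp_continuous_on dUc gc' s)
      then show ?thesis by (intro continuous_intros)
    qed
    obtain x where x: "s \<le> x" "x \<le> -1" "\<sigma> * deriv U (\<gamma> x) = 0"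
      using IVT'[of "\<lambda>x. \<sigma> * deriv U (\<gamma> x)" s 0 "-1"] neg pos s cf by auto
    have "deriv U (\<gamma> x) = 0" using x(3) unfolding \<sigma>_def by (auto split: if_splits)
    then show False using mb[OF x(2)] m by simp
  qed
  define T where "T = (8 * M + 2 * m + 4) / m^2"
  have M0: "0 \<le> M" using M[of 0] by simp
  have T0: "T > 0" unfolding T_def using M0 m by simp
  define a where "a = -1 - T"
  have a: "a < -1" unfolding a_def using T0 by simp
  obtain S D where p: "pcd \<gamma> a (-1) S D" using pc[of a "-1"] a by auto
  define I where "I = w (\<gamma> (-1)) - w (\<gamma> a)"
  have actI: "action U \<gamma> a (-1) = ereal I" unfolding I_def by (rule act) (use a in auto)
  define l where "l = m / 2"
  have l: "l > 0" using m unfolding l_def by simp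
  have lb: "l * \<sigma> * (\<gamma> (-1) - \<gamma> a) + l * integral {a..-1} (\<lambda>s. \<sigma> * deriv U (\<gamma> s)) - l^2 * (-1 - a) \<le> I"
    by (rule lb_pcd[OF p dUc actI _ sg2]) (use a in simp)
  define J where "J = integral {a..-1} (\<lambda>s. \<sigma> * deriv U (\<gamma> s))"
  have J: "m * T \<le> J"
  proof -
    have cf: "continuous_on {a..-1} (\<lambda>x. \<sigma> * deriv U (\<gamma> x))"
    proof -
      have "continuous_on {a..-1} (\<lambda>x. deriv U (\<gamma> x))"
        by (rule continuous_on_compose2[of UNIV "deriv U"]) (use gc'[of a "-1"] a in \<open>auto intro: continuous_at_imp_continuous_on dUc\<close>)
      then show ?thesis by (intro continuous_intros)
    qed
    have ci: "((\<lambda>s. m) has_integral (-1 - a) * m) {a..-1}"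
      using has_integral_const_real[of m a "-1"] a by (simp add: content_real)
    have "(-1 - a) * m \<le> J" unfolding J_def
      by (rule has_integral_le[OF ci integrable_integral[OF integrable_continuous_interval[OF cf]]])
        (use sg in simp)
    then show ?thesis unfolding a_def by (simp add: algebra_simps)
  qed
  have r1: "\<bar>\<gamma> (-1) - \<gamma> a\<bar> < 1" using range[of a] range[of "-1"] a by auto
  have "\<bar>l * \<sigma> * (\<gamma> (-1) - \<gamma> a)\<bar> \<le> l"
  proof -
    have "\<bar>\<sigma>\<bar> = 1" unfolding \<sigma>_def by simp
    then have "\<bar>l * \<sigma> * (\<gamma> (-1) - \<gamma> a)\<bar> = l * \<bar>\<gamma> (-1) - \<gamma> a\<bar>" using l by (simp add: abs_mult)
    also have "\<dots> \<le> l * 1" using r1 l by (intro mult_left_mono) auto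
    finally show ?thesis by simp
  qed
  then have t1: "- l \<le> l * \<sigma> * (\<gamma> (-1) - \<gamma> a)" by linarith
  have t2: "l * (m * T) \<le> l * J" using J l by (intro mult_left_mono) auto
  have t3: "l * (m * T) - l^2 * T = 2 * M + m / 2 + 1"
    unfolding l_def T_def using m by (simp add: power2_eq_square field_simps)
  have t4: "-1 - a = T" unfolding a_def by simp
  have "I \<le> 2 * M" unfolding I_def using M[of "\<gamma> (-1)"] M[of "\<gamma> a"] by linarith
  moreover have "- l + l * J - l^2 * T \<le> I"
  proof -
    have "l * \<sigma> * (\<gamma> (-1) - \<gamma> a) + l * J - l^2 * T \<le> I" using lb unfolding t4 J_def .
    then show ?thesis using t1 by linarith
  qed
  ultimately show False using t2 t3 unfolding l_def by linarith
qed




lemma W3hard_proof: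
  assumes sm: "smooth_fun U" and sk: "skew_periodic U" and cc: "crit_config U k q"
    and wk: "weak_KAM_neg U w" and e: "e > 0"
  shows "\<exists>z\<in>crit_set U. ereal (w z) + peierls U y z \<le> ereal (w y) + ereal e"
proof -
  have per: "\<And>x. deriv U (x + 1) = deriv U x" by (rule dU_periodic[OF sk])
  have dUc: "\<And>x. isCont (deriv U) x" by (rule smooth_deriv(2)[OF sm])
  have dUcont: "continuous_on UNIV (deriv U)" by (intro continuous_at_imp_continuous_on ballI dUc)
  obtain C where C: "\<And>x. \<bar>deriv U x\<bar> \<le> C" using periodic_cont_bounded[OF per dUcont] by blast
  have z0: "deriv U 0 = 0" by (rule crit_zero[OF cc])
  have wc: "continuous_on UNIV w" and wper: "\<And>x. w (x + 1) = w x"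
    using wk unfolding weak_KAM_neg_def by blast+
  obtain M where M: "\<And>x. \<bar>w x\<bar> \<le> M" using periodic_cont_bounded[OF wper wc] by blast
  obtain \<gamma> where g0: "\<gamma> 0 = y" and pc1: "\<And>a. a \<le> 0 \<Longrightarrow> \<gamma> piecewise_C1_differentiable_on {a..0}"
    and eq: "\<And>a b. a < b \<Longrightarrow> b \<le> 0 \<Longrightarrow> ereal (w (\<gamma> b) - w (\<gamma> a)) = action U \<gamma> a b"
    using wk unfolding weak_KAM_neg_def by metis
  have gc: "continuous_on {a..0} \<gamma>" if "a \<le> 0" for a
    using pc1[OF that] unfolding piecewise_C1_differentiable_on_def by blast
  have pc: "\<exists>S D. pcd \<gamma> a b S D" if "a < b" "b \<le> 0" for a b
  proof (rule pcd_exists)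
    show "\<gamma> piecewise_C1_differentiable_on {a..b}"
      by (rule piecewise_C1_differentiable_on_subset[OF pc1[of a]]) (use that in auto)
  qed
  have act: "action U \<gamma> a b = ereal (w (\<gamma> b) - w (\<gamma> a))" if "a < b" "b \<le> 0" for a b
    using eq[OF that] by simp
  have acab: "abs_cont_on \<gamma> a 0" if a0: "a < 0" for a
  proof -
    obtain S D where p: "pcd \<gamma> a 0 S D" using pc[of a 0] a0 by auto
    show ?thesis by (rule ac_pcd[OF p dUc C act]) (use a0 in auto)
  qed
  have e2: "e / 2 > 0" using e by simp
  obtain \<delta>1 where d1: "\<delta>1 > 0" "\<And>x x'. \<bar>x - x'\<bar> < \<delta>1 \<Longrightarrow> \<bar>w x - w x'\<bar> < e / 2"
    using periodic_cont_unif[OF wper wc e2] by blast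
  define \<rho> where "\<rho> = min 1 (e / 2)"
  have \<rho>: "\<rho> > 0" "\<rho> \<le> 1" "\<rho> \<le> e / 2" using e unfolding \<rho>_def by auto
  obtain \<delta>2 where d2: "\<delta>2 > 0" "\<And>x x'. \<bar>x - x'\<bar> < \<delta>2 \<Longrightarrow> \<bar>deriv U x - deriv U x'\<bar> < \<rho>"
    using periodic_cont_unif[OF per dUcont \<rho>(1)] by blast
  define \<delta> where "\<delta> = min (min \<delta>1 \<delta>2) \<rho>"
  have \<delta>: "\<delta> > 0" using d1 d2 \<rho> unfolding \<delta>_def by simp
  obtain a p where a: "a < 0" and pcrit: "deriv U p = 0" and ap: "\<bar>\<gamma> a - p\<bar> < \<delta>"
    using escape[OF dUc per z0 gc pc act M \<delta>] by blast
  define n where "n = \<lfloor>p\<rfloor>"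
  define p' where "p' = p - of_int n"
  have p'c: "deriv U p' = 0"
    using periodic_int[where f="deriv U", OF per, of "- of_int n" p] pcrit unfolding p'_def by simp
  have p'r: "p' \<in> {0..<1}" unfolding p'_def n_def by (rule frac_range)
  have p'A: "p' \<in> crit_set U" unfolding crit_set_def using p'c p'r by blast
  define d where "d = \<gamma> a - p"
  define lin where "lin = (\<lambda>s. p' + s * d)"
  have dd: "\<bar>d\<bar> < \<delta>" unfolding d_def using ap .
  have seg: "action U lin 0 1 \<le> ereal (\<rho>^2)"
  proof -
    have pw: "ennreal (Lag U (vector_derivative lin (at t)) (lin t)) * indicator {0..1} t \<le> ennreal (\<rho>^2) * indicator {0..1} t" for t
    proof (cases "t \<in> {0..1}")
      case True
      have "\<bar>lin t - p'\<bar> = \<bar>t\<bar> * \<bar>d\<bar>" unfolding lin_def by (simp add: abs_mult)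
      also have "\<dots> \<le> \<bar>d\<bar>" using True by (intro mult_left_le_one_le) auto
      finally have "\<bar>lin t - p'\<bar> < \<delta>2" using dd unfolding \<delta>_def by linarith
      then have u: "\<bar>deriv U (lin t)\<bar> < \<rho>" using d2(2)[of "lin t" p'] p'c by simp
      have dr: "\<bar>d\<bar> < \<rho>" using dd unfolding \<delta>_def by linarith
      have "\<bar>d + deriv U (lin t)\<bar> \<le> 2 * \<rho>" using u dr by linarith
      then have "(d + deriv U (lin t))^2 \<le> (2 * \<rho>)^2"
        by (metis abs_ge_zero power2_abs power_mono)
      then have "Lag U d (lin t) \<le> \<rho>^2" unfolding Lag_def by (simp add: power2_eq_square)
      then show ?thesis using True unfolding lin_def vd_linear by simp
    next
      case False
      then show ?thesis by simp
    qed
    have "LI U lin 0 1 \<le> (\<integral>\<^sup>+t. ennreal (\<rho>^2) * indicator {0..1::real} t \<partial>lborel)"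
      unfolding LI_def using pw by (intro nn_integral_mono) simp
    also have "\<dots> = ennreal (\<rho>^2)" by (simp add: nn_integral_cmult_indicator)
    finally have "LI U lin 0 1 \<le> ennreal (\<rho>^2)" .
    then have "enn2ereal (LI U lin 0 1) \<le> enn2ereal (ennreal (\<rho>^2))" by (simp add: less_eq_ennreal.rep_eq)
    then show ?thesis by (simp add: action_LI)
  qed
  have m1: "minact U 1 p' (\<gamma> a) \<le> action U lin 0 1"
  proof (rule minact_le)
    show "abs_cont_on lin 0 1" unfolding lin_def by (rule ac_linear)
    show "lin 0 = p'" unfolding lin_def by simp
    show "cong1 (lin 1) (\<gamma> a)" unfolding lin_def cong1_def d_def p'_def by simp
  qed
  define \<gamma>2 where "\<gamma>2 = (\<lambda>s. \<gamma> (s + a) + 0)"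
  have m2: "minact U (- a) (\<gamma> a) y \<le> action U \<gamma>2 0 (- a)"
  proof (rule minact_le)
    have "abs_cont_on \<gamma> (0 + a) (- a + a)" using acab[OF a] by simp
    then show "abs_cont_on \<gamma>2 0 (- a)" unfolding \<gamma>2_def by (rule ac_shift)
    show "\<gamma>2 0 = \<gamma> a" unfolding \<gamma>2_def by simp
    show "cong1 (\<gamma>2 (- a)) y" unfolding \<gamma>2_def using g0 by (simp add: cong1_refl)
  qed
  have a2: "action U \<gamma>2 0 (- a) = ereal (w y - w (\<gamma> a))"
  proof -
    have "action U \<gamma>2 0 (- a) = action U (\<lambda>s. \<gamma> (s + a)) 0 (- a)" unfolding \<gamma>2_def by simp
    also have "\<dots> = action U \<gamma> (0 + a) (- a + a)" by (rule action_shift_time)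
    also have "\<dots> = ereal (w y - w (\<gamma> a))" using act[of a 0] a g0 by simp
    finally show ?thesis .
  qed
  have pb: "peierls U y p' \<le> ereal (\<rho>^2) + ereal (w y - w (\<gamma> a))"
  proof -
    have "peierls U y p' = (INF T\<in>{0..}. minact U T p' y)" by (rule peierls_eq[OF per p'c])
    also have "\<dots> \<le> minact U (1 + - a) p' y" by (rule INF_lower) (use a in simp)
    also have "\<dots> \<le> minact U 1 p' (\<gamma> a) + minact U (- a) (\<gamma> a) y"
      by (rule minact_concat[OF per]) (use a in auto)
    also have "\<dots> \<le> ereal (\<rho>^2) + ereal (w y - w (\<gamma> a))"
      using m1 seg m2 a2 by (intro add_mono) auto
    finally show ?thesis .
  qed
  have wp: "w p' \<le> w (\<gamma> a) + e / 2"
  proof -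
    define x1 where "x1 = \<gamma> a - of_int n"
    have "w x1 = w (\<gamma> a)" unfolding x1_def by (rule periodic_cong1[where f=w, OF wper]) (simp add: cong1_def)
    moreover have "\<bar>p' - x1\<bar> < \<delta>1" using ap unfolding x1_def p'_def \<delta>_def by (simp add: abs_minus_commute)
    ultimately show ?thesis using d1(2)[of p' x1] by linarith
  qed
  have "ereal (w p') + peierls U y p' \<le> ereal (w (\<gamma> a) + e / 2) + (ereal (\<rho>^2) + ereal (w y - w (\<gamma> a)))"
    using wp pb by (intro add_mono) auto
  also have "\<dots> = ereal (w y + e / 2 + \<rho>^2)" by simp
  also have "\<dots> \<le> ereal (w y) + ereal e"
  proof -
    have "\<rho>^2 \<le> \<rho>" using \<rho> by (simp add: power2_eq_square mult_left_le_one_le)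
    then show ?thesis using \<rho> by simp
  qed
  finally show ?thesis using p'A by blast
qed


theorem corollary4p10:
  fixes U :: "real \<Rightarrow> real" and k :: nat and q :: "nat \<Rightarrow> real"
  assumes "smooth_fun U" and "skew_periodic U" and "crit_config U k q"
  shows "(\<forall>w. weak_KAM_neg U w \<longrightarrow>
            (\<forall>t\<ge>0. \<forall>y. LO U t (\<lambda>x. ereal (w x)) y = ereal (w y)) \<and>
            (\<forall>y. ereal (w y) = (INF x \<in> {0..<1}. ereal (w x) + mane U y x) \<and>
                 ereal (w y) = (INF z \<in> crit_set U. ereal (w z) + peierls U y z)))
       \<and> (\<forall>t\<ge>0. \<forall>y. LO U t (Wfun U k q) y = Wfun U k q y)"
proof (intro conjI allI impI)
  have per: "\<And>x. deriv U (x + 1) = deriv U x" by (rule dU_periodic[OF assms(2)])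
  show "LO U t (Wfun U k q) y = Wfun U k q y" if "t \<ge> 0" for t y
    by (rule Wfun_LO[OF assms that])
  fix w assume wk: "weak_KAM_neg U w"
  have wper: "\<And>x. w (x + 1) = w x" using wk unfolding weak_KAM_neg_def by blast
  have P: "ereal (w y) = (INF z \<in> crit_set U. ereal (w z) + peierls U y z)" for y
  proof (rule antisym)
    show "ereal (w y) \<le> (INF z \<in> crit_set U. ereal (w z) + peierls U y z)"
      by (rule INF_greatest) (rule wk_peierls[OF wk])
    show "(INF z \<in> crit_set U. ereal (w z) + peierls U y z) \<le> ereal (w y)"
    proof (rule ereal_le_epsilon2)
      fix e :: real assume e: "0 < e"
      obtain z where z: "z \<in> crit_set U" "ereal (w z) + peierls U y z \<le> ereal (w y) + ereal e"
        using W3hard_proof[OF assms wk e] by blast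
      have "(INF z \<in> crit_set U. ereal (w z) + peierls U y z) \<le> ereal (w z) + peierls U y z"
        by (rule INF_lower[OF z(1)])
      then show "(INF z \<in> crit_set U. ereal (w z) + peierls U y z) \<le> ereal (w y) + ereal e"
        using z(2) by simp
    qed
  qed
  then show "ereal (w y) = (INF z \<in> crit_set U. ereal (w z) + peierls U y z)" for y .
  show "ereal (w y) = (INF x \<in> {0..<1}. ereal (w x) + mane U y x)" for y
  proof (rule antisym)
    show "ereal (w y) \<le> (INF x \<in> {0..<1}. ereal (w x) + mane U y x)"
      by (rule INF_greatest) (rule wk_mane[OF wk])
    define x0 where "x0 = y - of_int \<lfloor>y\<rfloor>"
    have x0: "x0 \<in> {0..<1}" unfolding x0_def by (rule frac_range)
    have "(INF x \<in> {0..<1}. ereal (w x) + mane U y x) \<le> ereal (w x0) + mane U y x0"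
      by (rule INF_lower[OF x0])
    also have "mane U y x0 \<le> action U (snd (0::real, \<lambda>s::real. x0)) 0 (fst (0::real, \<lambda>s::real. x0))"
      unfolding mane_def
      by (rule INF_lower) (auto simp: ac_const x0_def intro: cong1_sym cong1_frac)
    also have "action U (snd (0::real, \<lambda>s::real. x0)) 0 (fst (0::real, \<lambda>s::real. x0)) = 0"
      by (simp add: action_point)
    also have "w x0 = w y" unfolding x0_def by (rule periodic_cong1[where f=w, OF wper]) (rule cong1_sym[OF cong1_frac])
    finally show "(INF x \<in> {0..<1}. ereal (w x) + mane U y x) \<le> ereal (w y)" by (simp add: add_left_mono)
  qed
  show "LO U t (\<lambda>x. ereal (w x)) y = ereal (w y)" if t: "t \<ge> 0" for t y
  proof (rule antisym)
    show "ereal (w y) \<le> LO U t (\<lambda>x. ereal (w x)) y"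
      unfolding LO_def by (rule INF_greatest) (rule wk_minact[OF wk t])
    show "LO U t (\<lambda>x. ereal (w x)) y \<le> ereal (w y)"
      unfolding P[of y]
    proof (rule INF_greatest)
      fix z assume z: "z \<in> crit_set U"
      have zz: "deriv U z = 0" "z \<in> {0..<1}" using crit_setD[OF z] by auto
      have "LO U t (\<lambda>x. ereal (w x)) y \<le> LO U t (\<lambda>x. ereal (w z) + peierls U x z) y"
        unfolding LO_def
      proof (rule INF_mono)
        fix x :: real assume x: "x \<in> {0..<1}"
        have "ereal (w x) \<le> ereal (w z) + peierls U x z" by (rule wk_peierls[OF wk])
        then show "\<exists>x'\<in>{0..<1}. ereal (w x') + minact U t x' y \<le> ereal (w z) + peierls U x z + minact U t x y"
          using x by (intro bexI[of _ x] add_right_mono)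
      qed
      also have "\<dots> = ereal (w z) + peierls U y z" by (rule LO_peierls[OF per zz _ t]) simp
      finally show "LO U t (\<lambda>x. ereal (w x)) y \<le> ereal (w z) + peierls U y z" .
    qed
  qed
qed


end
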